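(* Let $\phi$ solve $\widetilde\Box_g\phi=F$, where $g$ is a metric such that $H^{\alpha\beta}=g^{\alpha\beta}-m^{\alpha\beta}$ satisfies $|H^{L\underline L}|<\frac14$. Then at points with $r>0$, $$\Big|\Big(4\partial_s-\frac{H_{LL}}{2g^{L\underline L}}\partial_q-\frac{\overline{\mathrm{tr}}\,H+H_{L\underline L}}{2g^{L\underline L}\,r}\Big)\partial_q(r\phi)+\frac{rF}{2g^{L\underline L}}\Big|\lesssim r|\Delta_\omega\phi|+|H|_{L\mathcal T}\big(r|\bar\partial\partial\phi|+|\partial\phi|\big)+|H|\big(r|\bar\partial^2\phi|+|\bar\partial\phi|+r^{-1}|\phi|\big),$$ where $\Delta_\omega=\delta^{ij}\bar\partial_i\bar\partial_j$.
   Context: Coordinates $(t,x)$, $r=|x|$, $\omega=x/r$; $m$ Minkowski metric; indices raised/lowered with $m$, $g^{\alpha\beta}$ the inverse of $g_{\alpha\beta}$; $\widetilde\Box_g=g^{\alpha\beta}\partial_\alpha\partial_\beta$. $\partial_s=\frac12(\partial_t+\partial_r)$, $\partial_q=\frac12(\partial_r-\partial_t)$. Null frame $L=\partial_t+\partial_r$, $\underline L=\partial_t-\partial_r$, $S_1,S_2$ orthonormal tangent to spheres, $\mathcal T=\{L,S_1,S_2\}$. Lower-index frame components: $H_{XY}=m_{\alpha\mu}m_{\beta\nu}H^{\mu\nu}X^\alpha Y^\beta$. Upper frame components $\pi^{UV}$ of a tensor $\pi^{\alpha\beta}$ are defined by $\pi^{\alpha\beta}=\sum_{U,V\in\{L,\underline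 L,S_1,S_2\}}\pi^{UV}U^\alpha V^\beta$; in particular $\pi^{L\underline L}=\frac14\pi_{\underline LL}$ (so $m^{L\underline L}=-1/2$ and $g^{L\underline L}=-\frac12+H^{L\underline L}$). $\overline{\mathrm{tr}}\,H=H_{S_1S_1}+H_{S_2S_2}$; $|H|_{L\mathcal T}=\sum_{T\in\mathcal T}|H_{LT}|$; $|H|$ sum of absolute values of components. Tangential derivatives $\bar\partial_0=\partial_t+\partial_r$, $\bar\partial_i=\partial_i-\omega_i\omega^j\partial_j$; $|\bar\partial\phi|=\sum|\bar\partial_\alpha\phi|$, $|\bar\partial\partial\phi|=\sum|\bar\partial_\alpha\partial_\beta\phi|$, $|\bar\partial^2\phi|^2=\sum|\bar\partial_\alpha\bar\partial_\beta\phi|^2$. $\lesssim$ is up to an absolute constant. *)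

theory Defs
  imports "HOL-Analysis.Analysis"
begin

text \<open>Spacetime points are vectors in real^4; index 0 is time t, indices 1,2,3 are x.\<close>

definition dirv :: "(real^4 \<Rightarrow> real) \<Rightarrow> real^4 \<Rightarrow> real^4 \<Rightarrow> real" where
  "dirv f v p = deriv (\<lambda>h::real. f (p + h *\<^sub>R v)) 0"

definition pd :: "(real^4 \<Rightarrow> real) \<Rightarrow> 4 \<Rightarrow> real^4 \<Rightarrow> real" where
  "pd f a = dirv f (axis a 1)"

definition vf :: "(real^4 \<Rightarrow> real^4) \<Rightarrow> (real^4 \<Rightarrow> real) \<Rightarrow> real^4 \<Rightarrow> real" where
  "vf V f p = dirv f (V p) p"

definition C2 :: "(real^4 \<Rightarrow> real) \<Rightarrow> bool" where
  "C2 f \<longleftrightarrow> (\<forall>p. f differentiable (at p)) \<and>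
     (\<forall>a p. pd f a differentiable (at p)) \<and>
     (\<forall>a b. continuous_on UNIV (pd (pd f a) b))"

definition spat :: "real^4 \<Rightarrow> real^4" where
  "spat p = (\<chi> i. if i = 0 then 0 else p $ i)"

definition rad :: "real^4 \<Rightarrow> real" where
  "rad p = norm (spat p)"

definition omg :: "real^4 \<Rightarrow> real^4" where
  "omg p = (1 / rad p) *\<^sub>R spat p"

definition e0 :: "real^4" where
  "e0 = axis 0 1"

definition Lv :: "real^4 \<Rightarrow> real^4" where "Lv p = e0 + omg p"
definition Lbv :: "real^4 \<Rightarrow> real^4" where "Lbv p = e0 - omg p"
text \<open>d_s = (d_t + d_r)/2 and d_q = (d_r - d_t)/2 as vector fields.\<close>
definition sv :: "real^4 \<Rightarrow> real^4" where "sv p = (1/2) *\<^sub>R (e0 + omg p)"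
definition qv :: "real^4 \<Rightarrow> real^4" where "qv p = (1/2) *\<^sub>R (omg p - e0)"

definition barv :: "4 \<Rightarrow> real^4 \<Rightarrow> real^4" where
  "barv a p = (if a = 0 then Lv p else axis a 1 - (omg p $ a) *\<^sub>R omg p)"

definition mink :: "4 \<Rightarrow> 4 \<Rightarrow> real" where
  "mink a b = (if a = b then (if a = 0 then -1 else 1) else 0)"

definition mlow :: "real^4 \<Rightarrow> real^4" where
  "mlow v = (\<chi> a. (if a = 0 then -1 else 1) * v $ a)"

definition Hlow :: "(4 \<Rightarrow> 4 \<Rightarrow> real) \<Rightarrow> real^4 \<Rightarrow> real^4 \<Rightarrow> real" where
  "Hlow h X Y = (\<Sum>a\<in>UNIV. \<Sum>b\<in>UNIV. mlow X $ a * mlow Y $ b * h a b)"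

definition HupLLb :: "(4 \<Rightarrow> 4 \<Rightarrow> real) \<Rightarrow> real^4 \<Rightarrow> real" where
  "HupLLb h p = Hlow h (Lbv p) (Lv p) / 4"

definition gLLb :: "(4 \<Rightarrow> 4 \<Rightarrow> real) \<Rightarrow> real^4 \<Rightarrow> real" where
  "gLLb h p = - 1/2 + HupLLb h p"

definition boxg :: "(real^4 \<Rightarrow> 4 \<Rightarrow> 4 \<Rightarrow> real) \<Rightarrow> (real^4 \<Rightarrow> real) \<Rightarrow> real^4 \<Rightarrow> real" where
  "boxg H f p = (\<Sum>a\<in>UNIV. \<Sum>b\<in>UNIV. (mink a b + H p a b) * pd (pd f b) a p)"

definition habs :: "(4 \<Rightarrow> 4 \<Rightarrow> real) \<Rightarrow> real" where
  "habs h = (\<Sum>a\<in>UNIV. \<Sum>b\<in>UNIV. \<bar>h a b\<bar>)"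

definition HLT :: "(4 \<Rightarrow> 4 \<Rightarrow> real) \<Rightarrow> real^4 \<Rightarrow> real^4 \<Rightarrow> real^4 \<Rightarrow> real" where
  "HLT h p S1 S2 = \<bar>Hlow h (Lv p) (Lv p)\<bar> + \<bar>Hlow h (Lv p) S1\<bar> + \<bar>Hlow h (Lv p) S2\<bar>"

definition trbar :: "(4 \<Rightarrow> 4 \<Rightarrow> real) \<Rightarrow> real^4 \<Rightarrow> real^4 \<Rightarrow> real" where
  "trbar h S1 S2 = Hlow h S1 S1 + Hlow h S2 S2"

definition dabs :: "(real^4 \<Rightarrow> real) \<Rightarrow> real^4 \<Rightarrow> real" where
  "dabs f p = (\<Sum>a\<in>UNIV. \<bar>pd f a p\<bar>)"

definition bard_abs :: "(real^4 \<Rightarrow> real) \<Rightarrow> real^4 \<Rightarrow> real" where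
  "bard_abs f p = (\<Sum>a\<in>UNIV. \<bar>vf (barv a) f p\<bar>)"

definition bardd_abs :: "(real^4 \<Rightarrow> real) \<Rightarrow> real^4 \<Rightarrow> real" where
  "bardd_abs f p = (\<Sum>a\<in>UNIV. \<Sum>b\<in>UNIV. \<bar>vf (barv a) (pd f b) p\<bar>)"

definition bar2_norm :: "(real^4 \<Rightarrow> real) \<Rightarrow> real^4 \<Rightarrow> real" where
  "bar2_norm f p = sqrt (\<Sum>a\<in>UNIV. \<Sum>b\<in>UNIV. (vf (barv a) (vf (barv b) f) p)^2)"

definition lapw :: "(real^4 \<Rightarrow> real) \<Rightarrow> real^4 \<Rightarrow> real" where
  "lapw f p = (\<Sum>i\<in>UNIV - {0}. vf (barv i) (vf (barv i) f) p)"

end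

theory Submission
  imports Defs
begin


lemma exhaust4: fixes x :: 4 shows "x = 0 \<or> x = 1 \<or> x = 2 \<or> x = 3"
proof (induct x)
  case (of_int z)
  then have "z = 0 \<or> z = 1 \<or> z = 2 \<or> z = 3" by fastforce
  then show ?case by auto
qed

lemma UNIV4: "UNIV = {0, 1, 2, 3::4}"
  using exhaust4 by auto

lemma sum4: "sum f (UNIV::4 set) = f 0 + f 1 + f 2 + f 3"
  unfolding UNIV4 by (simp add: ac_simps)

lemma line_deriv_gen:
  assumes "(f has_derivative f') (at (y + t0 *\<^sub>R v))"
  shows "((\<lambda>t. f (y + t *\<^sub>R v)) has_real_derivative f' v) (at t0)"
proof -
  have l: "linear f'" using assms has_derivative_linear by blast
  have "((\<lambda>t. y + t *\<^sub>R v) has_derivative (\<lambda>t. t *\<^sub>R v)) (at t0)"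
    by (auto intro!: derivative_eq_intros)
  from has_derivative_compose[OF this assms]
  have "((\<lambda>t. f (y + t *\<^sub>R v)) has_derivative (\<lambda>t. f' (t *\<^sub>R v))) (at t0)" .
  moreover have "(\<lambda>t. f' (t *\<^sub>R v)) = (*) (f' v)"
    using l by (auto simp: linear_scale fun_eq_iff)
  ultimately show ?thesis unfolding has_field_derivative_def by simp
qed

lemma dirv_eq:
  assumes "(f has_derivative f') (at q)"
  shows "dirv f v q = f' v"
proof -
  have "((\<lambda>t. f (q + t *\<^sub>R v)) has_real_derivative f' v) (at 0)"
    by (rule line_deriv_gen) (use assms in simp)
  then show ?thesis unfolding dirv_def by (rule DERIV_imp_deriv)
qed

lemma line_deriv:
  assumes "f differentiable (at (y + t0 *\<^sub>R v))"
  shows "((\<lambda>t. f (y + t *\<^sub>R v)) has_real_derivative dirv f v (y + t0 *\<^sub>R v)) (at t0)"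
proof -
  obtain f' where f': "(f has_derivative f') (at (y + t0 *\<^sub>R v))"
    using assms unfolding differentiable_def by blast
  show ?thesis using line_deriv_gen[OF f'] dirv_eq[OF f'] by simp
qed

lemma line_deriv0:
  assumes "f differentiable (at p)"
  shows "((\<lambda>t. f (p + t *\<^sub>R v)) has_real_derivative dirv f v p) (at 0)"
  using line_deriv[of f p 0 v] assms by simp

lemma dirv_expand:
  assumes "f differentiable (at q)"
  shows "dirv f v q = (\<Sum>a\<in>UNIV. v $ a * pd f a q)"
proof -
  obtain f' where f': "(f has_derivative f') (at q)"
    using assms unfolding differentiable_def by blast
  have l: "linear f'" using f' has_derivative_linear by blast
  have "f' v = f' (\<Sum>a\<in>UNIV. v $ a *\<^sub>R axis a 1)"
    using basis_expansion[of v] by (simp add: scalar_mult_eq_scaleR)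
  also have "\<dots> = (\<Sum>a\<in>UNIV. v $ a * f' (axis a 1))"
    using l by (simp add: linear_sum linear_scale)
  finally show ?thesis unfolding pd_def dirv_eq[OF f'] by simp
qed

lemma spat_add: "spat (x + y) = spat x + spat y"
  by (simp add: spat_def vec_eq_iff)
lemma spat_scale: "spat (c *\<^sub>R x) = c *\<^sub>R spat x"
  by (simp add: spat_def vec_eq_iff)

lemma rad_line_deriv:
  assumes "rad p > 0"
  shows "((\<lambda>h. rad (p + h *\<^sub>R v)) has_real_derivative (omg p \<bullet> spat v)) (at 0)"
proof -
  have nz: "spat p \<noteq> 0" using assms by (auto simp: rad_def)
  have "((\<lambda>h. norm (spat p + h *\<^sub>R spat v)) has_real_derivative (sgn (spat p) \<bullet> spat v)) (at 0)"
    using line_deriv_gen[of norm "\<lambda>y. y \<bullet> sgn (spat p)" "spat p" 0 "spat v"]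
       has_derivative_norm[OF nz] by (simp add: inner_commute)
  moreover have "sgn (spat p) = omg p"
    by (simp add: sgn_div_norm omg_def rad_def divide_inverse_commute)
  ultimately show ?thesis by (simp add: rad_def spat_add spat_scale)
qed

lemma omg_line_deriv:
  assumes "rad p > 0"
  shows "((\<lambda>h. omg (p + h *\<^sub>R v) $ k) has_real_derivative
          ((spat v $ k - (omg p \<bullet> spat v) * omg p $ k) / rad p)) (at 0)"
proof -
  have e: "(\<lambda>h. omg (p + h *\<^sub>R v) $ k) = (\<lambda>h. (spat p $ k + h * spat v $ k) / rad (p + h *\<^sub>R v))"
    by (simp add: omg_def spat_add spat_scale fun_eq_iff divide_inverse_commute)
  have d1: "((\<lambda>h. spat p $ k + h * spat v $ k) has_real_derivative spat v $ k) (at 0)"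
    by (auto intro!: derivative_eq_intros)
  have "((\<lambda>h. (spat p $ k + h * spat v $ k) / rad (p + h *\<^sub>R v)) has_real_derivative
      ((spat v $ k) * rad p - (spat p $ k) * (omg p \<bullet> spat v)) / (rad p * rad p)) (at 0)"
    using DERIV_divide[OF d1 rad_line_deriv[OF assms, of v]] assms by simp
  moreover have "((spat v $ k) * rad p - (spat p $ k) * (omg p \<bullet> spat v)) / (rad p * rad p)
      = (spat v $ k - (omg p \<bullet> spat v) * omg p $ k) / rad p"
    using assms by (simp add: omg_def field_simps)
  ultimately show ?thesis by (simp add: e)
qed

lemma field_deriv:
  assumes "\<And>b. ((\<lambda>h. V (p + h *\<^sub>R v) $ b) has_real_derivative dV b) (at 0)"
    and "\<And>b. g b differentiable (at p)"
  shows "((\<lambda>h. \<Sum>b\<in>UNIV. V (p + h *\<^sub>R v) $ b * g b (p + h *\<^sub>R v)) has_real_derivative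
           (\<Sum>b\<in>UNIV. dV b * g b p + V p $ b * dirv (g b) v p)) (at 0)"
  apply (rule DERIV_sum)
  subgoal for b using DERIV_mult[OF assms(1)[of b] line_deriv0[OF assms(2)[of b], of v]]
    by (simp add: algebra_simps)
  done

lemma vf_field:
  assumes "\<And>b. ((\<lambda>h. V (p + h *\<^sub>R v) $ b) has_real_derivative dV b) (at 0)"
    and "\<And>b. g b differentiable (at p)"
    and "\<And>y. G y = (\<Sum>b\<in>UNIV. V y $ b * g b y)"
  shows "dirv G v p = (\<Sum>b\<in>UNIV. dV b * g b p + V p $ b * dirv (g b) v p)"
proof -
  have "dirv G v p = deriv (\<lambda>h. \<Sum>b\<in>UNIV. V (p + h *\<^sub>R v) $ b * g b (p + h *\<^sub>R v)) 0"
    unfolding dirv_def assms(3) ..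
  also have "\<dots> = (\<Sum>b\<in>UNIV. dV b * g b p + V p $ b * dirv (g b) v p)"
    by (rule DERIV_imp_deriv, rule field_deriv[OF assms(1,2)])
  finally show ?thesis .
qed


lemma C2_diff: "C2 f \<Longrightarrow> f differentiable (at p)"
  by (simp add: C2_def)
lemma C2_diff2: "C2 f \<Longrightarrow> pd f a differentiable (at p)"
  by (simp add: C2_def)

lemma delta_mvt:
  assumes f: "C2 f" and h: "h > 0"
  shows "\<exists>\<xi>. norm (\<xi> - p) < 2 * h \<and>
    f (p + h *\<^sub>R axis a 1 + h *\<^sub>R axis b 1) - f (p + h *\<^sub>R axis a 1) - f (p + h *\<^sub>R axis b 1) + f p
      = h * h * pd (pd f a) b \<xi>"
proof -
  let ?ea = "axis a 1 :: real^4" and ?eb = "axis b 1 :: real^4"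
  define G where "G t = f ((p + h *\<^sub>R ?eb) + t *\<^sub>R ?ea) - f (p + t *\<^sub>R ?ea)" for t
  have dG: "DERIV G t :> pd f a ((p + h *\<^sub>R ?eb) + t *\<^sub>R ?ea) - pd f a (p + t *\<^sub>R ?ea)" for t
    unfolding G_def pd_def
    by (intro DERIV_diff line_deriv C2_diff[OF f])
  have "\<exists>z. 0 < z \<and> z < h \<and> G h - G 0 = (h - 0) * (\<lambda>t. pd f a ((p + h *\<^sub>R ?eb) + t *\<^sub>R ?ea) - pd f a (p + t *\<^sub>R ?ea)) z"
    by (rule MVT2[OF h]) (rule dG)
  then obtain \<theta> where th: "0 < \<theta>" "\<theta> < h"
    "G h - G 0 = (h - 0) * (pd f a ((p + h *\<^sub>R ?eb) + \<theta> *\<^sub>R ?ea) - pd f a (p + \<theta> *\<^sub>R ?ea))"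
    by blast
  define K where "K s = pd f a ((p + \<theta> *\<^sub>R ?ea) + s *\<^sub>R ?eb)" for s
  have dK: "DERIV K s :> pd (pd f a) b ((p + \<theta> *\<^sub>R ?ea) + s *\<^sub>R ?eb)" for s
    unfolding K_def pd_def[of "pd f a"]
    by (intro line_deriv C2_diff2[OF f])
  have "\<exists>z. 0 < z \<and> z < h \<and> K h - K 0 = (h - 0) * (\<lambda>s. pd (pd f a) b ((p + \<theta> *\<^sub>R ?ea) + s *\<^sub>R ?eb)) z"
    by (rule MVT2[OF h]) (rule dK)
  then obtain \<sigma> where sg: "0 < \<sigma>" "\<sigma> < h"
    "K h - K 0 = (h - 0) * pd (pd f a) b ((p + \<theta> *\<^sub>R ?ea) + \<sigma> *\<^sub>R ?eb)"
    by blast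
  define \<xi> where "\<xi> = (p + \<theta> *\<^sub>R ?ea) + \<sigma> *\<^sub>R ?eb"
  have "norm (\<xi> - p) \<le> norm (\<theta> *\<^sub>R ?ea) + norm (\<sigma> *\<^sub>R ?eb)"
    unfolding \<xi>_def by (simp add: norm_triangle_ineq del: norm_scaleR)
  also have "\<dots> = \<theta> + \<sigma>" using th sg by simp
  finally have n: "norm (\<xi> - p) < 2 * h" using th sg by simp
  have "K h - K 0 = pd f a ((p + h *\<^sub>R ?eb) + \<theta> *\<^sub>R ?ea) - pd f a (p + \<theta> *\<^sub>R ?ea)"
    unfolding K_def by (simp add: ac_simps)
  then have "G h - G 0 = h * h * pd (pd f a) b \<xi>"
    using th(3) sg(3) unfolding \<xi>_def by simp
  moreover have "G h - G 0 = f (p + h *\<^sub>R axis a 1 + h *\<^sub>R axis b 1) - f (p + h *\<^sub>R axis a 1) - f (p + h *\<^sub>R axis b 1) + f p"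
    unfolding G_def by (simp add: ac_simps)
  ultimately show ?thesis using n by metis
qed

lemma abs_aux: "\<bar>u - x1\<bar> < e \<Longrightarrow> \<bar>v - x2\<bar> < (e::real) \<Longrightarrow> u = v \<Longrightarrow> e = \<bar>x1 - x2\<bar> / 2 \<Longrightarrow> False"
  by (simp add: abs_if split: if_splits)

lemma schwarz:
  assumes f: "C2 f"
  shows "pd (pd f a) b p = pd (pd f b) a p"
proof (rule ccontr)
  let ?X1 = "pd (pd f a) b p" and ?X2 = "pd (pd f b) a p"
  assume ne: "?X1 \<noteq> ?X2"
  define e where "e = \<bar>?X1 - ?X2\<bar> / 2"
  have e: "e > 0" using ne by (simp add: e_def)
  have c1: "continuous_on UNIV (pd (pd f a) b)" and c2: "continuous_on UNIV (pd (pd f b) a)"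
    using f by (auto simp: C2_def)
  obtain d1 where d1: "d1 > 0" "\<And>y. dist y p < d1 \<Longrightarrow> dist (pd (pd f a) b y) ?X1 < e"
    using c1 e unfolding continuous_on_iff by blast
  obtain d2 where d2: "d2 > 0" "\<And>y. dist y p < d2 \<Longrightarrow> dist (pd (pd f b) a y) ?X2 < e"
    using c2 e unfolding continuous_on_iff by blast
  define h where "h = min d1 d2 / 4"
  have h: "h > 0" using d1 d2 by (simp add: h_def)
  obtain \<xi> where xi: "norm (\<xi> - p) < 2 * h"
    "f (p + h *\<^sub>R axis a 1 + h *\<^sub>R axis b 1) - f (p + h *\<^sub>R axis a 1) - f (p + h *\<^sub>R axis b 1) + f p
      = h * h * pd (pd f a) b \<xi>"
    using delta_mvt[OF f h, of p a b] by blast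
  obtain \<eta> where eta: "norm (\<eta> - p) < 2 * h"
    "f (p + h *\<^sub>R axis b 1 + h *\<^sub>R axis a 1) - f (p + h *\<^sub>R axis b 1) - f (p + h *\<^sub>R axis a 1) + f p
      = h * h * pd (pd f b) a \<eta>"
    using delta_mvt[OF f h, of p b a] by blast
  have "p + h *\<^sub>R axis b 1 + h *\<^sub>R axis a 1 = p + h *\<^sub>R axis a 1 + h *\<^sub>R axis b 1"
    by (simp add: ac_simps)
  note eta2 = eta(2)[unfolded this]
  have "h * h * pd (pd f a) b \<xi> = h * h * pd (pd f b) a \<eta>"
    using xi(2) eta2 by linarith
  then have eq: "pd (pd f a) b \<xi> = pd (pd f b) a \<eta>" using h by simp
  have "dist \<xi> p < d1" using xi(1) h_def d1 d2 by (simp add: dist_norm)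
  then have 1: "\<bar>pd (pd f a) b \<xi> - ?X1\<bar> < e" using d1(2) by (simp add: dist_real_def)
  have "dist \<eta> p < d2" using eta(1) h_def d1 d2 by (simp add: dist_norm)
  then have 2: "\<bar>pd (pd f b) a \<eta> - ?X2\<bar> < e" using d2(2) by (simp add: dist_real_def)
  show False using abs_aux[OF 1 2 eq e_def] .
qed


definition domg :: "real^4 \<Rightarrow> real^4 \<Rightarrow> 4 \<Rightarrow> real" where
  "domg v p k = (spat v $ k - (omg p \<bullet> spat v) * omg p $ k) / rad p"

definition dbarv :: "4 \<Rightarrow> real^4 \<Rightarrow> real^4 \<Rightarrow> 4 \<Rightarrow> real" where
  "dbarv j v p b = (if j = 0 then domg v p b else - (domg v p j * omg p $ b + omg p $ j * domg v p b))"

lemma omg0: "omg y $ 0 = 0"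
  by (simp add: omg_def spat_def)
lemma e0_comp: "e0 $ b = (if b = 0 then 1 else 0)"
  by (simp add: e0_def axis_def)

lemma barv_comp: "barv j y $ b = (if j = 0 then e0 $ b + omg y $ b else axis j 1 $ b - omg y $ j * omg y $ b)"
  by (simp add: barv_def Lv_def)
lemma qv_comp: "qv y $ b = (omg y $ b - e0 $ b) / 2"
  by (simp add: qv_def)
lemma sv_comp: "sv y $ b = (e0 $ b + omg y $ b) / 2"
  by (simp add: sv_def)

lemma barv_line:
  assumes "rad p > 0"
  shows "((\<lambda>h. barv j (p + h *\<^sub>R v) $ b) has_real_derivative dbarv j v p b) (at 0)"
proof -
  have o: "\<And>k. ((\<lambda>h. omg (p + h *\<^sub>R v) $ k) has_real_derivative domg v p k) (at 0)"
    unfolding domg_def by (rule omg_line_deriv[OF assms])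
  show ?thesis
  proof (cases "j = 0")
    case True
    show ?thesis using DERIV_add[OF DERIV_const[of "e0 $ b"] o[of b]] True
      by (simp add: barv_comp dbarv_def)
  next
    case False
    show ?thesis using DERIV_diff[OF DERIV_const[of "axis j 1 $ b"] DERIV_mult[OF o[of j] o[of b]]] False
      by (simp add: barv_comp dbarv_def algebra_simps)
  qed
qed

lemma qv_line:
  assumes "rad p > 0"
  shows "((\<lambda>h. qv (p + h *\<^sub>R v) $ b) has_real_derivative domg v p b / 2) (at 0)"
proof -
  have o: "\<And>k. ((\<lambda>h. omg (p + h *\<^sub>R v) $ k) has_real_derivative domg v p k) (at 0)"
    unfolding domg_def by (rule omg_line_deriv[OF assms])
  show ?thesis using DERIV_cdivide[OF DERIV_diff[OF o[of b] DERIV_const[of "e0 $ b"]], of 2]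
    by (simp add: qv_comp)
qed

lemma vf_first:
  assumes "C2 \<phi>"
  shows "vf V \<phi> y = (\<Sum>b\<in>UNIV. V y $ b * pd \<phi> b y)"
  unfolding vf_def by (rule dirv_expand[OF C2_diff[OF assms]])

lemma vf_barv_pd:
  assumes "C2 \<phi>"
  shows "vf (barv i) (pd \<phi> b) p = (\<Sum>a\<in>UNIV. barv i p $ a * pd (pd \<phi> b) a p)"
  unfolding vf_def by (rule dirv_expand[OF C2_diff2[OF assms]])

lemma vf_Y:
  assumes "C2 \<phi>" "rad p > 0"
  shows "vf (barv i) (vf (barv j) \<phi>) p = (\<Sum>b\<in>UNIV. dbarv j (barv i p) p b * pd \<phi> b p
      + barv j p $ b * (\<Sum>a\<in>UNIV. barv i p $ a * pd (pd \<phi> b) a p))"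
proof -
  have "vf (barv i) (vf (barv j) \<phi>) p = dirv (vf (barv j) \<phi>) (barv i p) p"
    by (simp add: vf_def)
  also have "\<dots> = (\<Sum>b\<in>UNIV. dbarv j (barv i p) p b * pd \<phi> b p + barv j p $ b * dirv (pd \<phi> b) (barv i p) p)"
    by (rule vf_field[where V="barv j" and g="\<lambda>b. pd \<phi> b" and G="vf (barv j) \<phi>"])
       (auto intro: barv_line[OF assms(2)] C2_diff2[OF assms(1)] vf_first[OF assms(1)])
  also have "\<dots> = (\<Sum>b\<in>UNIV. dbarv j (barv i p) p b * pd \<phi> b p
      + barv j p $ b * (\<Sum>a\<in>UNIV. barv i p $ a * pd (pd \<phi> b) a p))"
    by (simp add: dirv_expand[OF C2_diff2[OF assms(1)]])
  finally show ?thesis .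
qed

lemma norm_omg: "rad y > 0 \<Longrightarrow> norm (omg y) = 1"
  by (simp add: omg_def rad_def)

lemma omg_inner_self: "rad y > 0 \<Longrightarrow> omg y \<bullet> omg y = 1"
  using norm_omg by (simp add: dot_square_norm)

lemma spat_qv: "spat (qv y) = (1/2) *\<^sub>R omg y"
  by (simp add: spat_def qv_comp vec_eq_iff e0_comp omg0)
lemma spat_sv: "spat (sv y) = (1/2) *\<^sub>R omg y"
  by (simp add: spat_def sv_comp vec_eq_iff e0_comp omg0)

lemma psi_eq:
  assumes "C2 \<phi>" "rad y > 0"
  shows "vf qv (\<lambda>y. rad y * \<phi> y) y = \<phi> y / 2 + rad y * (\<Sum>b\<in>UNIV. qv y $ b * pd \<phi> b y)"
proof -
  have "((\<lambda>h. rad (y + h *\<^sub>R qv y) * \<phi> (y + h *\<^sub>R qv y)) has_real_derivative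
     (omg y \<bullet> spat (qv y)) * \<phi> y + dirv \<phi> (qv y) y * rad y) (at 0)"
    using DERIV_mult[OF rad_line_deriv[OF assms(2)] line_deriv0[OF C2_diff[OF assms(1)]]] by simp
  then have "vf qv (\<lambda>y. rad y * \<phi> y) y = (omg y \<bullet> spat (qv y)) * \<phi> y + dirv \<phi> (qv y) y * rad y"
    unfolding vf_def dirv_def by (rule DERIV_imp_deriv)
  also have "omg y \<bullet> spat (qv y) = 1/2"
    using omg_inner_self[OF assms(2)] by (simp add: spat_qv)
  finally show ?thesis
    by (simp add: dirv_expand[OF C2_diff[OF assms(1)]] mult.commute)
qed

lemma cont_rad_line: "continuous_on UNIV (\<lambda>h::real. rad (p + h *\<^sub>R v))"
proof -
  have e: "(\<lambda>h::real. rad (p + h *\<^sub>R v)) = (\<lambda>h. norm (spat p + h *\<^sub>R spat v))"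
    by (simp add: rad_def spat_add spat_scale)
  have "continuous_on UNIV (\<lambda>h::real. norm (spat p + h *\<^sub>R spat v))"
    by (intro continuous_intros)
  then show ?thesis unfolding e .
qed

lemma psi_line:
  assumes "C2 \<phi>" "rad p > 0"
  shows "dirv (vf qv (\<lambda>y. rad y * \<phi> y)) v p =
     dirv \<phi> v p / 2 + (omg p \<bullet> spat v) * (\<Sum>b\<in>UNIV. qv p $ b * pd \<phi> b p)
     + rad p * (\<Sum>b\<in>UNIV. domg v p b / 2 * pd \<phi> b p + qv p $ b * dirv (pd \<phi> b) v p)"
proof -
  let ?E = "\<lambda>h. \<phi> (p + h *\<^sub>R v) / 2 + rad (p + h *\<^sub>R v) *
     (\<Sum>b\<in>UNIV. qv (p + h *\<^sub>R v) $ b * pd \<phi> b (p + h *\<^sub>R v))"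
  have dE: "(?E has_real_derivative dirv \<phi> v p / 2 + ((omg p \<bullet> spat v) * (\<Sum>b\<in>UNIV. qv p $ b * pd \<phi> b p)
     + (\<Sum>b\<in>UNIV. domg v p b / 2 * pd \<phi> b p + qv p $ b * dirv (pd \<phi> b) v p) * rad p)) (at 0)"
  proof -
    have d1: "((\<lambda>h. \<phi> (p + h *\<^sub>R v)) has_real_derivative dirv \<phi> v p) (at 0)"
      by (rule line_deriv0[OF C2_diff[OF assms(1)]])
    have d2: "((\<lambda>h. rad (p + h *\<^sub>R v)) has_real_derivative (omg p \<bullet> spat v)) (at 0)"
      by (rule rad_line_deriv[OF assms(2)])
    have d3: "((\<lambda>h. \<Sum>b\<in>UNIV. qv (p + h *\<^sub>R v) $ b * pd \<phi> b (p + h *\<^sub>R v)) has_real_derivative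
           (\<Sum>b\<in>UNIV. domg v p b / 2 * pd \<phi> b p + qv p $ b * dirv (pd \<phi> b) v p)) (at 0)"
      by (rule field_deriv[where V=qv and g="\<lambda>b. pd \<phi> b"])
         (auto intro: qv_line[OF assms(2)] C2_diff2[OF assms(1)])
    show ?thesis using DERIV_add[OF DERIV_cdivide[OF d1, of 2] DERIV_mult[OF d2 d3]] by simp
  qed
  have op: "open {h::real. 0 < rad (p + h *\<^sub>R v)}"
    by (rule open_Collect_less[OF continuous_on_const cont_rad_line])
  have "((\<lambda>h. vf qv (\<lambda>y. rad y * \<phi> y) (p + h *\<^sub>R v)) has_real_derivative
     dirv \<phi> v p / 2 + ((omg p \<bullet> spat v) * (\<Sum>b\<in>UNIV. qv p $ b * pd \<phi> b p)
     + (\<Sum>b\<in>UNIV. domg v p b / 2 * pd \<phi> b p + qv p $ b * dirv (pd \<phi> b) v p) * rad p)) (at 0)"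
    by (rule has_field_derivative_transform_within_open[OF dE op])
       (use assms(2) psi_eq[OF assms(1)] in auto)
  then have "dirv (vf qv (\<lambda>y. rad y * \<phi> y)) v p = dirv \<phi> v p / 2 + ((omg p \<bullet> spat v) * (\<Sum>b\<in>UNIV. qv p $ b * pd \<phi> b p)
     + (\<Sum>b\<in>UNIV. domg v p b / 2 * pd \<phi> b p + qv p $ b * dirv (pd \<phi> b) v p) * rad p)"
    unfolding dirv_def[of "vf qv (\<lambda>y. rad y * \<phi> y)"] by (rule DERIV_imp_deriv)
  then show ?thesis by (simp add: algebra_simps)
qed


definition bil :: "(4 \<Rightarrow> 4 \<Rightarrow> real) \<Rightarrow> real^4 \<Rightarrow> real^4 \<Rightarrow> real" where
  "bil X U V = (\<Sum>a\<in>UNIV. \<Sum>b\<in>UNIV. U $ a * V $ b * X a b)"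

lemma bil_add_l: "bil X (U + U') V = bil X U V + bil X U' V"
  by (simp add: bil_def algebra_simps sum.distrib)
lemma bil_add_r: "bil X U (V + V') = bil X U V + bil X U V'"
  by (simp add: bil_def algebra_simps sum.distrib)
lemma bil_diff_l: "bil X (U - U') V = bil X U V - bil X U' V"
  by (simp add: bil_def algebra_simps sum_subtractf)
lemma bil_diff_r: "bil X U (V - V') = bil X U V - bil X U V'"
  by (simp add: bil_def algebra_simps sum_subtractf)
lemma bil_scale_l: "bil X (c *\<^sub>R U) V = c * bil X U V"
  by (simp add: bil_def algebra_simps sum_distrib_left)
lemma bil_scale_r: "bil X U (c *\<^sub>R V) = c * bil X U V"
  by (simp add: bil_def algebra_simps sum_distrib_left)
lemma bil_zero_l: "bil X 0 V = 0" by (simp add: bil_def)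
lemma bil_zero_r: "bil X U 0 = 0" by (simp add: bil_def)

lemma bil_sum_l: "bil X (\<Sum>k::4\<in>UNIV. c k *\<^sub>R U k) V = (\<Sum>k\<in>UNIV. c k * bil X (U k) V)"
  by (simp add: sum4 bil_add_l bil_scale_l)
lemma bil_sum_r: "bil X V (\<Sum>k::4\<in>UNIV. c k *\<^sub>R U k) = (\<Sum>k\<in>UNIV. c k * bil X V (U k))"
  by (simp add: sum4 bil_add_r bil_scale_r)

lemma bil_sym: "(\<And>a b. X a b = X b a) \<Longrightarrow> bil X U V = bil X V U"
  unfolding bil_def by (subst sum.swap) (simp add: ac_simps)

lemma bil_axis: "bil X (axis a 1) (axis b 1) = X a b"
  using exhaust4[of a] exhaust4[of b] by (auto simp: bil_def axis_def sum4)

lemma swap4: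
  "(\<Sum>a\<in>UNIV. \<Sum>b\<in>UNIV. \<Sum>k\<in>UNIV. \<Sum>l\<in>UNIV. G a b k l) =
   (\<Sum>k\<in>UNIV. \<Sum>l\<in>UNIV. \<Sum>a\<in>UNIV. \<Sum>b\<in>UNIV. (G a b k l :: real))"
proof -
  have "(\<Sum>a\<in>UNIV. \<Sum>b\<in>UNIV. \<Sum>k\<in>UNIV. \<Sum>l\<in>UNIV. G a b k l) =
        (\<Sum>a\<in>UNIV. \<Sum>k\<in>UNIV. \<Sum>b\<in>UNIV. \<Sum>l\<in>UNIV. G a b k l)"
    by (rule sum.cong[OF refl], rule sum.swap)
  also have "\<dots> = (\<Sum>k\<in>UNIV. \<Sum>a\<in>UNIV. \<Sum>b\<in>UNIV. \<Sum>l\<in>UNIV. G a b k l)"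
    by (rule sum.swap)
  also have "\<dots> = (\<Sum>k\<in>UNIV. \<Sum>a\<in>UNIV. \<Sum>l\<in>UNIV. \<Sum>b\<in>UNIV. G a b k l)"
    by (rule sum.cong[OF refl], rule sum.cong[OF refl], rule sum.swap)
  also have "\<dots> = (\<Sum>k\<in>UNIV. \<Sum>l\<in>UNIV. \<Sum>a\<in>UNIV. \<Sum>b\<in>UNIV. G a b k l)"
    by (rule sum.cong[OF refl], rule sum.swap)
  finally show ?thesis .
qed

lemma decomp:
  fixes U A :: "4 \<Rightarrow> real^4"
  assumes K: "\<And>a c. (\<Sum>k\<in>UNIV. U k $ a * A k $ c) = (if a = c then 1 else 0)"
  shows "(\<Sum>a\<in>UNIV. \<Sum>b\<in>UNIV. H a b * X a b) =
         (\<Sum>k\<in>UNIV. \<Sum>l\<in>UNIV. bil H (A k) (A l) * bil X (U k) (U l))"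
proof -
  have vec: "axis c 1 = (\<Sum>k\<in>UNIV. A k $ c *\<^sub>R U k)" for c
  proof -
    have "(\<Sum>k\<in>UNIV. A k $ c *\<^sub>R U k) $ a = axis c 1 $ a" for a
      using K[of a c] by (auto simp: sum_component axis_def mult.commute)
    then show ?thesis by (simp add: vec_eq_iff)
  qed
  have Xab: "X a b = (\<Sum>k\<in>UNIV. \<Sum>l\<in>UNIV. A k $ a * A l $ b * bil X (U k) (U l))" for a b
  proof -
    have "X a b = bil X (axis a 1) (axis b 1)" by (simp add: bil_axis)
    also have "\<dots> = bil X (\<Sum>k\<in>UNIV. A k $ a *\<^sub>R U k) (\<Sum>l\<in>UNIV. A l $ b *\<^sub>R U l)"
      using vec by metis
    also have "\<dots> = (\<Sum>k\<in>UNIV. \<Sum>l\<in>UNIV. A k $ a * A l $ b * bil X (U k) (U l))"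
      apply (simp only: bil_sum_l)
      apply (simp only: bil_sum_r)
      apply (simp add: sum_distrib_left mult.assoc)
      done
    finally show ?thesis .
  qed
  have "(\<Sum>a\<in>UNIV. \<Sum>b\<in>UNIV. H a b * X a b) =
      (\<Sum>a\<in>UNIV. \<Sum>b\<in>UNIV. \<Sum>k\<in>UNIV. \<Sum>l\<in>UNIV. A k $ a * A l $ b * H a b * bil X (U k) (U l))"
    by (simp add: Xab[of _ _] sum_distrib_left ac_simps)
  also have "\<dots> = (\<Sum>k\<in>UNIV. \<Sum>l\<in>UNIV. \<Sum>a\<in>UNIV. \<Sum>b\<in>UNIV. A k $ a * A l $ b * H a b * bil X (U k) (U l))"
    by (rule swap4)
  also have "\<dots> = (\<Sum>k\<in>UNIV. \<Sum>l\<in>UNIV. bil H (A k) (A l) * bil X (U k) (U l))"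
    by (simp add: bil_def sum_distrib_right)
  finally show ?thesis .
qed


lemma sumsp: "sum f (UNIV - {0::4}) = f 1 + f 2 + f 3"
  unfolding UNIV4 by (simp add: ac_simps)

lemma inner4: "(x::real^4) \<bullet> y = x$0*y$0 + x$1*y$1 + x$2*y$2 + x$3*y$3"
  by (simp add: inner_vec_def sum4)

lemma spat_comp: "spat v $ k = (if k = 0 then 0 else v $ k)"
  by (simp add: spat_def)

lemma ww: "rad p > 0 \<Longrightarrow> (omg p $ 1)^2 + (omg p $ 2)^2 + (omg p $ 3)^2 = 1"
  using omg_inner_self[of p] by (simp add: inner4 omg0 power2_eq_square)

lemma barv_vec: "i \<noteq> 0 \<Longrightarrow> barv i p = axis i 1 - (omg p $ i) *\<^sub>R omg p"
  by (simp add: barv_def)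

lemma spat_barv: "i \<noteq> 0 \<Longrightarrow> spat (barv i p) = barv i p"
  by (simp add: vec_eq_iff spat_comp barv_comp omg0 axis_def)

lemma omg_barv: "rad p > 0 \<Longrightarrow> i \<noteq> 0 \<Longrightarrow> omg p \<bullet> barv i p = 0"
  using omg_inner_self[of p] by (simp add: barv_vec inner_diff_right inner_axis)

lemma dom_barv: "rad p > 0 \<Longrightarrow> i \<noteq> 0 \<Longrightarrow> domg (barv i p) p k = barv i p $ k / rad p"
  by (simp add: domg_def spat_barv omg_barv)

lemma spat_L: "spat (Lv p) = omg p"
  by (simp add: vec_eq_iff spat_comp Lv_def e0_comp omg0)

lemma dom_L: "rad p > 0 \<Longrightarrow> domg (Lv p) p k = 0"
  by (simp add: domg_def spat_L omg_inner_self)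

lemma dom_sv: "rad p > 0 \<Longrightarrow> domg (sv p) p k = 0"
  by (simp add: domg_def spat_sv omg_inner_self)

lemma dom_qv: "rad p > 0 \<Longrightarrow> domg (qv p) p k = 0"
  by (simp add: domg_def spat_qv omg_inner_self)

lemma omg_spat_sv: "rad p > 0 \<Longrightarrow> omg p \<bullet> spat (sv p) = 1/2"
  by (simp add: spat_sv omg_inner_self)
lemma omg_spat_qv: "rad p > 0 \<Longrightarrow> omg p \<bullet> spat (qv p) = 1/2"
  by (simp add: spat_qv omg_inner_self)

lemma sv_L: "sv p = (1/2) *\<^sub>R Lv p"
  by (simp add: sv_def Lv_def)
lemma qv_Lb: "qv p = (-1/2) *\<^sub>R Lbv p"
  by (simp add: qv_def Lbv_def algebra_simps)

lemma frame_sum: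
  assumes "S $ 0 = 0"
  shows "(\<Sum>i\<in>UNIV - {0}. S $ i *\<^sub>R barv i p) = S - (S \<bullet> omg p) *\<^sub>R omg p"
proof -
  have "(\<Sum>i\<in>UNIV - {0}. S $ i *\<^sub>R barv i p) $ k = (S - (S \<bullet> omg p) *\<^sub>R omg p) $ k" for k
    using exhaust4[of k] assms
    by (auto simp: sumsp barv_comp inner4 omg0 axis_def algebra_simps)
  then show ?thesis by (simp add: vec_eq_iff)
qed

lemma sum_comm_sp: "(\<Sum>b\<in>UNIV. V $ b * (\<Sum>a\<in>UNIV. U $ a * X a b)) = bil X U V"
  unfolding bil_def by (subst sum.swap) (simp add: sum_distrib_left ac_simps)

lemma bil_sumsp_l: "bil X (\<Sum>i\<in>UNIV - {0::4}. c i *\<^sub>R U i) V = (\<Sum>i\<in>UNIV - {0}. c i * bil X (U i) V)"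
  by (simp add: sumsp bil_add_l bil_scale_l)
lemma bil_sumsp_r: "bil X V (\<Sum>i\<in>UNIV - {0::4}. c i *\<^sub>R U i) = (\<Sum>i\<in>UNIV - {0}. c i * bil X V (U i))"
  by (simp add: sumsp bil_add_r bil_scale_r)

lemma completeness:
  assumes r: "rad p > 0" and "S1 $ 0 = 0" "S2 $ 0 = 0" "norm S1 = 1" "norm S2 = 1"
    "S1 \<bullet> S2 = 0" "S1 \<bullet> omg p = 0" "S2 \<bullet> omg p = 0"
  shows "e0 $ a * e0 $ c + omg p $ a * omg p $ c + S1 $ a * S1 $ c + S2 $ a * S2 $ c = (if a = c then 1 else 0)"
proof -
  define Q :: "real^4^4" where "Q = (\<chi> k. if k = 0 then e0 else if k = 1 then omg p else if k = 2 then S1 else S2)"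
  have q: "Q $ 0 = e0" "Q $ 1 = omg p" "Q $ 2 = S1" "Q $ 3 = S2" by (simp_all add: Q_def)
  have ip: "e0 \<bullet> e0 = 1" "e0 \<bullet> omg p = 0" "e0 \<bullet> S1 = 0" "e0 \<bullet> S2 = 0"
      "omg p \<bullet> omg p = 1" "S1 \<bullet> S1 = 1" "S2 \<bullet> S2 = 1"
    using assms omg_inner_self[OF r] by (simp_all add: e0_def inner_axis' omg0 dot_square_norm)
  have "(Q ** transpose Q) $ i $ j = mat 1 $ i $ j" for i j
  proof -
    have "(Q ** transpose Q) $ i $ j = Q $ i \<bullet> Q $ j"
      by (simp add: matrix_matrix_mult_def transpose_def inner_vec_def)
    then show ?thesis using exhaust4[of i] exhaust4[of j] q ip assms
      by (auto simp: mat_def inner_commute)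
  qed
  then have "Q ** transpose Q = mat 1" by (simp add: vec_eq_iff)
  then have "transpose Q ** Q = mat 1" using matrix_left_right_inverse by blast
  then have "(transpose Q ** Q) $ a $ c = mat 1 $ a $ c" by simp
  then show ?thesis
    by (simp add: matrix_matrix_mult_def transpose_def sum4 q mat_def)
qed


lemma Hlow_bil: "Hlow h u v = bil h (mlow u) (mlow v)"
  by (simp add: Hlow_def bil_def)

lemma mlow_scale: "mlow (c *\<^sub>R v) = c *\<^sub>R mlow v"
  by (simp add: mlow_def vec_eq_iff)

lemma Hlow_scale_l: "Hlow h (c *\<^sub>R u) v = c * Hlow h u v"
  by (simp add: Hlow_bil mlow_scale bil_scale_l)
lemma Hlow_scale_r: "Hlow h u (c *\<^sub>R v) = c * Hlow h u v"
  by (simp add: Hlow_bil mlow_scale bil_scale_r)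

lemma Hlow_minus_l: "Hlow h (- u) v = - Hlow h u v"
  using Hlow_scale_l[of h "-1" u v] by simp
lemma Hlow_minus_r: "Hlow h u (- v) = - Hlow h u v"
  using Hlow_scale_r[of h u "-1" v] by simp

lemma Hlow_sym: "(\<And>a b. h a b = h b a) \<Longrightarrow> Hlow h u v = Hlow h v u"
  unfolding Hlow_bil by (rule bil_sym)

lemma mlow_comp: "mlow v $ c = (if c = 0 then - v $ c else v $ c)"
  by (simp add: mlow_def)

lemma L_comp: "Lv p $ a = e0 $ a + omg p $ a" by (simp add: Lv_def)
lemma Lb_comp: "Lbv p $ a = e0 $ a - omg p $ a" by (simp add: Lbv_def)

definition Ufr :: "real^4 \<Rightarrow> real^4 \<Rightarrow> real^4 \<Rightarrow> 4 \<Rightarrow> real^4" where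
  "Ufr p S1 S2 k = (if k = 0 then Lv p else if k = 1 then Lbv p else if k = 2 then S1 else S2)"
definition Afr :: "real^4 \<Rightarrow> real^4 \<Rightarrow> real^4 \<Rightarrow> 4 \<Rightarrow> real^4" where
  "Afr p S1 S2 k = mlow (if k = 0 then (-1/2) *\<^sub>R Lbv p else if k = 1 then (-1/2) *\<^sub>R Lv p else if k = 2 then S1 else S2)"

context
  fixes p :: "real^4" and S1 S2 :: "real^4"
  assumes r: "rad p > 0" and s10: "S1 $ 0 = 0" and s20: "S2 $ 0 = 0"
    and n1: "norm S1 = 1" and n2: "norm S2 = 1"
    and s12: "S1 \<bullet> S2 = 0" and s1w: "S1 \<bullet> omg p = 0" and s2w: "S2 \<bullet> omg p = 0"
begin

lemma Kcond:
  "(\<Sum>k\<in>UNIV. (Ufr p S1 S2) k $ a *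
     (Afr p S1 S2) k $ c)
   = (if a = c then 1 else 0)"
proof -
  have cp: "e0 $ a * e0 $ c + omg p $ a * omg p $ c + S1 $ a * S1 $ c + S2 $ a * S2 $ c = (if a = c then 1 else 0)"
    by (rule completeness[OF r s10 s20 n1 n2 s12 s1w s2w])
  show ?thesis
  proof (cases "c = 0")
    case True
    then show ?thesis using cp s10 s20 omg0[of p]
      by (simp add: Ufr_def Afr_def sum4 L_comp Lb_comp mlow_comp e0_comp algebra_simps)
  next
    case False
    then show ?thesis using cp
      by (simp add: Ufr_def Afr_def sum4 L_comp Lb_comp mlow_comp e0_comp algebra_simps)
  qed
qed

lemma HX:
  assumes hs: "\<And>a b. h a b = h b a" and xs: "\<And>a b. X a b = X b a"
  shows "(\<Sum>a\<in>UNIV. \<Sum>b\<in>UNIV. h a b * X a b) =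
     1/4 * Hlow h (Lbv p) (Lbv p) * bil X (Lv p) (Lv p) + 1/4 * Hlow h (Lv p) (Lv p) * bil X (Lbv p) (Lbv p)
   + 1/2 * Hlow h (Lv p) (Lbv p) * bil X (Lv p) (Lbv p)
   - Hlow h (Lbv p) S1 * bil X (Lv p) S1 - Hlow h (Lbv p) S2 * bil X (Lv p) S2
   - Hlow h (Lv p) S1 * bil X (Lbv p) S1 - Hlow h (Lv p) S2 * bil X (Lbv p) S2
   + Hlow h S1 S1 * bil X S1 S1 + 2 * Hlow h S1 S2 * bil X S1 S2 + Hlow h S2 S2 * bil X S2 S2"
proof -
  have hsy: "Hlow h u v = Hlow h v u" for u v by (rule Hlow_sym) (rule hs)
  have xsy: "bil X u v = bil X v u" for u v by (rule bil_sym) (rule xs)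
  have "(\<Sum>a\<in>UNIV. \<Sum>b\<in>UNIV. h a b * X a b) =
    (\<Sum>k\<in>UNIV. \<Sum>l\<in>UNIV.
      bil h ((Afr p S1 S2) k)
            ((Afr p S1 S2) l) *
      bil X ((Ufr p S1 S2) k)
            ((Ufr p S1 S2) l))"
    by (rule decomp[OF Kcond])
  also have "\<dots> = 1/4 * Hlow h (Lbv p) (Lbv p) * bil X (Lv p) (Lv p) + 1/4 * Hlow h (Lv p) (Lv p) * bil X (Lbv p) (Lbv p)
   + 1/2 * Hlow h (Lv p) (Lbv p) * bil X (Lv p) (Lbv p)
   - Hlow h (Lbv p) S1 * bil X (Lv p) S1 - Hlow h (Lbv p) S2 * bil X (Lv p) S2
   - Hlow h (Lv p) S1 * bil X (Lbv p) S1 - Hlow h (Lv p) S2 * bil X (Lbv p) S2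
   + Hlow h S1 S1 * bil X S1 S1 + 2 * Hlow h S1 S2 * bil X S1 S2 + Hlow h S2 S2 * bil X S2 S2"
    using hsy[of "Lbv p" "Lv p"] hsy[of S1 "Lv p"] hsy[of S2 "Lv p"]
      hsy[of S1 "Lbv p"] hsy[of S2 "Lbv p"] hsy[of S2 S1]
      xsy[of "Lbv p" "Lv p"] xsy[of S1 "Lv p"] xsy[of S2 "Lv p"]
      xsy[of S1 "Lbv p"] xsy[of S2 "Lbv p"] xsy[of S2 S1]
    by (simp add: Ufr_def Afr_def sum4 Hlow_bil[symmetric] Hlow_scale_l Hlow_scale_r Hlow_minus_l Hlow_minus_r algebra_simps)
  finally show ?thesis .
qed

end


lemma bil_minus_l: "bil X (- u) v = - bil X u v"
  using bil_scale_l[of X "-1" u v] by simp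
lemma bil_minus_r: "bil X u (- v) = - bil X u v"
  using bil_scale_r[of X u "-1" v] by simp

context
  fixes \<phi> :: "real^4 \<Rightarrow> real" and p :: "real^4"
  assumes C: "C2 \<phi>" and r: "rad p > 0"
begin

abbreviation "XX \<equiv> (\<lambda>a b. pd (pd \<phi> b) a p)"
abbreviation "DD \<equiv> (\<lambda>b. pd \<phi> b p)"

lemma barv0: "barv 0 y = Lv y" by (simp add: barv_def)

lemma Xsym: "XX a b = XX b a"
  by (rule schwarz[OF C])

lemma dirv_pd: "dirv (pd \<phi> b) v p = (\<Sum>a\<in>UNIV. v $ a * XX a b)"
  by (rule dirv_expand[OF C2_diff2[OF C]])

lemma dirv_phi: "dirv \<phi> v p = (\<Sum>a\<in>UNIV. v $ a * DD a)"
  by (rule dirv_expand[OF C2_diff[OF C]])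

lemma G1: "vf qv (\<lambda>y. rad y * \<phi> y) p = \<phi> p / 2 + rad p * (\<Sum>b\<in>UNIV. qv p $ b * DD b)"
  by (rule psi_eq[OF C r])

lemma G2: "vf sv (vf qv (\<lambda>y. rad y * \<phi> y)) p =
   (\<Sum>b\<in>UNIV. sv p $ b * DD b) / 2 + (\<Sum>b\<in>UNIV. qv p $ b * DD b) / 2 - rad p / 4 * bil XX (Lv p) (Lbv p)"
proof -
  have "vf sv (vf qv (\<lambda>y. rad y * \<phi> y)) p = dirv (vf qv (\<lambda>y. rad y * \<phi> y)) (sv p) p"
    by (simp add: vf_def)
  also have "\<dots> = (\<Sum>b\<in>UNIV. sv p $ b * DD b) / 2 + (1/2) * (\<Sum>b\<in>UNIV. qv p $ b * DD b)
     + rad p * bil XX (sv p) (qv p)"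
    by (simp add: psi_line[OF C r] dirv_phi dirv_pd dom_sv[OF r] omg_spat_sv[OF r] sum_comm_sp)
  also have "bil XX (sv p) (qv p) = - (1/4) * bil XX (Lv p) (Lbv p)"
    by (simp add: sv_L qv_Lb bil_scale_l bil_scale_r bil_minus_l bil_minus_r)
  finally show ?thesis by simp
qed

lemma G3: "vf qv (vf qv (\<lambda>y. rad y * \<phi> y)) p =
   (\<Sum>b\<in>UNIV. qv p $ b * DD b) + rad p / 4 * bil XX (Lbv p) (Lbv p)"
proof -
  have "vf qv (vf qv (\<lambda>y. rad y * \<phi> y)) p = dirv (vf qv (\<lambda>y. rad y * \<phi> y)) (qv p) p"
    by (simp add: vf_def)
  also have "\<dots> = (\<Sum>b\<in>UNIV. qv p $ b * DD b) / 2 + (1/2) * (\<Sum>b\<in>UNIV. qv p $ b * DD b)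
     + rad p * bil XX (qv p) (qv p)"
    by (simp add: psi_line[OF C r] dirv_phi dirv_pd dom_qv[OF r] omg_spat_qv[OF r] sum_comm_sp)
  also have "bil XX (qv p) (qv p) = (1/4) * bil XX (Lbv p) (Lbv p)"
    by (simp add: qv_Lb bil_scale_l bil_scale_r bil_minus_l bil_minus_r)
  finally show ?thesis by simp
qed

lemma G4: "(\<Sum>b\<in>UNIV. omg p $ b * DD b) = (\<Sum>b\<in>UNIV. sv p $ b * DD b) + (\<Sum>b\<in>UNIV. qv p $ b * DD b)"
  by (simp add: sum.distrib[symmetric] sv_comp qv_comp algebra_simps add_divide_distrib[symmetric])

lemma G5: "boxg H \<phi> p = (- XX 0 0 + XX 1 1 + XX 2 2 + XX 3 3) + (\<Sum>a\<in>UNIV. \<Sum>b\<in>UNIV. H p a b * XX a b)"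
proof -
  have "boxg H \<phi> p = (\<Sum>a\<in>UNIV. \<Sum>b\<in>UNIV. mink a b * XX a b) + (\<Sum>a\<in>UNIV. \<Sum>b\<in>UNIV. H p a b * XX a b)"
    by (simp add: boxg_def distrib_right sum.distrib)
  moreover have "(\<Sum>a\<in>UNIV. \<Sum>b\<in>UNIV. mink a b * XX a b) = - XX 0 0 + XX 1 1 + XX 2 2 + XX 3 3"
    by (simp add: sum4 mink_def)
  ultimately show ?thesis by simp
qed

lemma G11: "vf (barv a) \<phi> p = (\<Sum>b\<in>UNIV. barv a p $ b * DD b)"
  by (rule vf_first[OF C])

lemma G10: "i \<noteq> 0 \<Longrightarrow> j \<noteq> 0 \<Longrightarrow> vf (barv i) (vf (barv j) \<phi>) p =
   bil XX (barv i p) (barv j p) - (barv i p $ j * (\<Sum>b\<in>UNIV. omg p $ b * DD b)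
      + omg p $ j * (\<Sum>b\<in>UNIV. barv i p $ b * DD b)) / rad p"
  unfolding vf_Y[OF C r] sum.distrib sum_comm_sp
  by (simp add: dbarv_def dom_barv[OF r]
      sum_distrib_left sum_divide_distrib algebra_simps diff_divide_distrib add_divide_distrib
      sum_subtractf sum_negf)

lemma G9: "i \<noteq> 0 \<Longrightarrow> vf (barv i) (vf (barv 0) \<phi>) p =
   (\<Sum>b\<in>UNIV. barv i p $ b * DD b) / rad p + bil XX (barv i p) (Lv p)"
  unfolding vf_Y[OF C r] sum.distrib sum_comm_sp
  by (simp add: dbarv_def dom_barv[OF r] sum_divide_distrib barv0)

lemma G8: "vf (barv 0) (vf (barv 0) \<phi>) p = bil XX (Lv p) (Lv p)"
  unfolding vf_Y[OF C r] sum.distrib sum_comm_sp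
  by (simp add: dbarv_def barv0 dom_L[OF r])

end


lemma omg_expand: "omg p = omg p $ 1 *\<^sub>R axis 1 1 + omg p $ 2 *\<^sub>R axis 2 1 + omg p $ 3 *\<^sub>R axis 3 1"
proof -
  have "omg p $ k = (omg p $ 1 *\<^sub>R axis 1 1 + omg p $ 2 *\<^sub>R axis 2 1 + omg p $ 3 *\<^sub>R axis 3 1) $ k" for k :: 4
    using exhaust4[of k] by (elim disjE) (simp_all add: axis_def omg0)
  then show ?thesis by (subst vec_eq_iff) blast
qed

lemma frame_sum3:
  assumes "S $ 0 = 0" "S \<bullet> omg p = 0"
  shows "S $ 1 *\<^sub>R barv 1 p + S $ 2 *\<^sub>R barv 2 p + S $ 3 *\<^sub>R barv 3 p = S"
  using frame_sum[OF assms(1), of p] assms(2) by (simp add: sumsp)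

context
  fixes \<phi> :: "real^4 \<Rightarrow> real" and p :: "real^4"
  assumes C: "C2 \<phi>" and r: "rad p > 0"
begin

abbreviation "XH \<equiv> (\<lambda>a b. pd (pd \<phi> b) a p)"
abbreviation "DH \<equiv> (\<lambda>b. pd \<phi> b p)"

lemma G7: "bil XH (Lv p) (Lbv p) = XH 0 0 - bil XH (omg p) (omg p)"
proof -
  have s: "bil XH (axis 0 1) (omg p) = bil XH (omg p) (axis 0 1)"
    by (rule bil_sym) (rule Xsym[OF C r])
  show ?thesis
    by (simp add: Lv_def Lbv_def e0_def bil_add_l bil_diff_l bil_add_r bil_diff_r bil_axis s)
qed

lemma bb: "i \<noteq> 0 \<Longrightarrow> bil XH (barv i p) (barv i p) =
   XH i i - omg p $ i * bil XH (axis i 1) (omg p) - omg p $ i * bil XH (omg p) (axis i 1)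
   + omg p $ i * omg p $ i * bil XH (omg p) (omg p)"
  by (simp add: barv_vec bil_diff_l bil_diff_r bil_scale_l bil_scale_r bil_axis algebra_simps)

lemma G6: "lapw \<phi> p = XH 1 1 + XH 2 2 + XH 3 3 - bil XH (omg p) (omg p)
    - 2 * (\<Sum>b\<in>UNIV. omg p $ b * DH b) / rad p"
proof -
  let ?w = "omg p"
  let ?Dr = "\<Sum>b\<in>UNIV. omg p $ b * DH b"
  let ?B = "\<lambda>i. \<Sum>b\<in>UNIV. barv i p $ b * DH b"
  have l: "lapw \<phi> p = (bil XH (barv 1 p) (barv 1 p) + bil XH (barv 2 p) (barv 2 p) + bil XH (barv 3 p) (barv 3 p))
     - ((barv 1 p $ 1 + barv 2 p $ 2 + barv 3 p $ 3) * ?Dr + (?w $ 1 * ?B 1 + ?w $ 2 * ?B 2 + ?w $ 3 * ?B 3)) / rad p"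
    by (simp add: lapw_def sumsp G10[OF C r] add_divide_distrib diff_divide_distrib algebra_simps)
  have e1: "?w $ 1 * bil XH (axis 1 1) ?w + ?w $ 2 * bil XH (axis 2 1) ?w + ?w $ 3 * bil XH (axis 3 1) ?w = bil XH ?w ?w"
  proof -
    have "bil XH (?w $ 1 *\<^sub>R axis 1 1 + ?w $ 2 *\<^sub>R axis 2 1 + ?w $ 3 *\<^sub>R axis 3 1) ?w = bil XH ?w ?w"
      using arg_cong[where f="\<lambda>u. bil XH u (omg p)", OF omg_expand[of p, symmetric]] .
    then show ?thesis by (simp only: bil_add_l bil_scale_l)
  qed
  have e2: "?w $ 1 * bil XH ?w (axis 1 1) + ?w $ 2 * bil XH ?w (axis 2 1) + ?w $ 3 * bil XH ?w (axis 3 1) = bil XH ?w ?w"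
  proof -
    have "bil XH ?w (?w $ 1 *\<^sub>R axis 1 1 + ?w $ 2 *\<^sub>R axis 2 1 + ?w $ 3 *\<^sub>R axis 3 1) = bil XH ?w ?w"
      using arg_cong[where f="\<lambda>u. bil XH (omg p) u", OF omg_expand[of p, symmetric]] .
    then show ?thesis by (simp only: bil_add_r bil_scale_r)
  qed
  have w2: "?w $ 1 * ?w $ 1 + ?w $ 2 * ?w $ 2 + ?w $ 3 * ?w $ 3 = 1"
    using ww[OF r] by (simp add: power2_eq_square)
  have s1: "bil XH (barv 1 p) (barv 1 p) + bil XH (barv 2 p) (barv 2 p) + bil XH (barv 3 p) (barv 3 p)
      = XH 1 1 + XH 2 2 + XH 3 3 - bil XH ?w ?w"
  proof -
    have "bil XH (barv 1 p) (barv 1 p) + bil XH (barv 2 p) (barv 2 p) + bil XH (barv 3 p) (barv 3 p)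
      = XH 1 1 + XH 2 2 + XH 3 3
        - (?w $ 1 * bil XH (axis 1 1) ?w + ?w $ 2 * bil XH (axis 2 1) ?w + ?w $ 3 * bil XH (axis 3 1) ?w)
        - (?w $ 1 * bil XH ?w (axis 1 1) + ?w $ 2 * bil XH ?w (axis 2 1) + ?w $ 3 * bil XH ?w (axis 3 1))
        + (?w $ 1 * ?w $ 1 + ?w $ 2 * ?w $ 2 + ?w $ 3 * ?w $ 3) * bil XH ?w ?w"
      by (simp add: bb algebra_simps)
    then show ?thesis using e1 e2 w2 by simp
  qed
  have s2: "barv 1 p $ 1 + barv 2 p $ 2 + barv 3 p $ 3 = 2"
    using w2 by (simp add: barv_comp axis_def)
  have fs: "?w $ 1 *\<^sub>R barv 1 p + ?w $ 2 *\<^sub>R barv 2 p + ?w $ 3 *\<^sub>R barv 3 p = 0"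
    using frame_sum[OF omg0, of p p] omg_inner_self[OF r] by (simp add: sumsp)
  have s3: "?w $ 1 * ?B 1 + ?w $ 2 * ?B 2 + ?w $ 3 * ?B 3 = 0"
  proof -
    have "?w $ 1 * ?B 1 + ?w $ 2 * ?B 2 + ?w $ 3 * ?B 3 =
       (\<Sum>b\<in>UNIV. (?w $ 1 *\<^sub>R barv 1 p + ?w $ 2 *\<^sub>R barv 2 p + ?w $ 3 *\<^sub>R barv 3 p) $ b * DH b)"
      by (simp add: sum_distrib_left sum.distrib algebra_simps)
    then show ?thesis using fs by simp
  qed
  show ?thesis using l s1 s2 s3 by simp
qed

lemma G12: "(\<Sum>b\<in>UNIV. sv p $ b * DH b) = vf (barv 0) \<phi> p / 2"
  by (simp add: G11[OF C r] barv0[OF C r] sv_L sum_divide_distrib)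

lemma G13:
  assumes "S $ 0 = 0" "S \<bullet> omg p = 0"
  shows "rad p * bil XH (Lv p) S = (\<Sum>i\<in>UNIV - {0}. S $ i *
     (rad p * vf (barv i) (vf (barv 0) \<phi>) p - vf (barv i) \<phi> p))"
proof -
  have "bil XH (Lv p) S = bil XH S (Lv p)" by (rule bil_sym) (rule Xsym[OF C r])
  also have "\<dots> = bil XH (\<Sum>i\<in>UNIV - {0}. S $ i *\<^sub>R barv i p) (Lv p)"
    using frame_sum[OF assms(1), of p] assms(2) by simp
  also have "\<dots> = (\<Sum>i\<in>UNIV - {0}. S $ i * bil XH (barv i p) (Lv p))"
    by (rule bil_sumsp_l)
  finally have e: "bil XH (Lv p) S = (\<Sum>i\<in>UNIV - {0}. S $ i * bil XH (barv i p) (Lv p))" .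
  have "(\<Sum>i\<in>UNIV - {0}. S $ i * (rad p * vf (barv i) (vf (barv 0) \<phi>) p - vf (barv i) \<phi> p))
      = (\<Sum>i\<in>UNIV - {0}. S $ i * (rad p * bil XH (barv i p) (Lv p)))"
    using r by (intro sum.cong refl) (auto simp: G9[OF C r] G11[OF C r] algebra_simps)
  then show ?thesis by (simp add: e sum_distrib_left algebra_simps)
qed

lemma G14:
  assumes "S $ 0 = 0" "S \<bullet> omg p = 0"
  shows "bil XH (Lbv p) S = (\<Sum>i\<in>UNIV - {0}. S $ i *
     (\<Sum>b\<in>UNIV. Lbv p $ b * vf (barv i) (pd \<phi> b) p))"
proof -
  have "bil XH (Lbv p) S = bil XH S (Lbv p)" by (rule bil_sym) (rule Xsym[OF C r])
  also have "\<dots> = bil XH (\<Sum>i\<in>UNIV - {0}. S $ i *\<^sub>R barv i p) (Lbv p)"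
    using frame_sum[OF assms(1), of p] assms(2) by simp
  also have "\<dots> = (\<Sum>i\<in>UNIV - {0}. S $ i * bil XH (barv i p) (Lbv p))"
    by (rule bil_sumsp_l)
  finally show ?thesis
    by (simp add: vf_barv_pd[OF C] sum_comm_sp)
qed

end


context
  fixes \<phi> :: "real^4 \<Rightarrow> real" and p :: "real^4"
  assumes C: "C2 \<phi>" and r: "rad p > 0"
begin

abbreviation "XI \<equiv> (\<lambda>a b. pd (pd \<phi> b) a p)"
abbreviation "DI \<equiv> (\<lambda>b. pd \<phi> b p)"

lemma G15:
  assumes S0: "S $ 0 = 0" and Sw: "S \<bullet> omg p = 0" and T0: "T $ 0 = 0" and Tw: "T \<bullet> omg p = 0"
  shows "rad p * bil XI S T - (S \<bullet> T) * (\<Sum>b\<in>UNIV. omg p $ b * DI b) =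
    rad p * (\<Sum>i\<in>UNIV - {0}. S $ i * (\<Sum>j\<in>UNIV - {0}. T $ j * vf (barv i) (vf (barv j) \<phi>) p))"
proof -
  let ?Dr = "\<Sum>b\<in>UNIV. omg p $ b * DI b"
  let ?B = "\<lambda>i. \<Sum>b\<in>UNIV. barv i p $ b * DI b"
  have inner: "(\<Sum>j\<in>UNIV - {0}. T $ j * vf (barv i) (vf (barv j) \<phi>) p)
      = bil XI (barv i p) T - (barv i p \<bullet> T) * ?Dr / rad p" if i: "i \<noteq> 0" for i
  proof -
    have tw: "T $ 1 * omg p $ 1 + T $ 2 * omg p $ 2 + T $ 3 * omg p $ 3 = 0"
      using Tw T0 by (simp add: inner4 mult.commute)
    have tb: "barv i p \<bullet> T = T $ 1 * barv i p $ 1 + T $ 2 * barv i p $ 2 + T $ 3 * barv i p $ 3"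
      using T0 by (simp add: inner4 mult.commute)
    have bt: "bil XI (barv i p) T = T $ 1 * bil XI (barv i p) (barv 1 p) + T $ 2 * bil XI (barv i p) (barv 2 p)
         + T $ 3 * bil XI (barv i p) (barv 3 p)"
    proof -
      have "bil XI (barv i p) T = bil XI (barv i p) (T $ 1 *\<^sub>R barv 1 p + T $ 2 *\<^sub>R barv 2 p + T $ 3 *\<^sub>R barv 3 p)"
        using frame_sum3[OF T0 Tw] by simp
      then show ?thesis by (simp only: bil_add_r bil_scale_r)
    qed
    have "(\<Sum>j\<in>UNIV - {0}. T $ j * vf (barv i) (vf (barv j) \<phi>) p)
      = (T $ 1 * bil XI (barv i p) (barv 1 p) + T $ 2 * bil XI (barv i p) (barv 2 p)
         + T $ 3 * bil XI (barv i p) (barv 3 p))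
        - ((T $ 1 * barv i p $ 1 + T $ 2 * barv i p $ 2 + T $ 3 * barv i p $ 3) * ?Dr
          + (T $ 1 * omg p $ 1 + T $ 2 * omg p $ 2 + T $ 3 * omg p $ 3) * ?B i) / rad p"
      using i by (simp add: sumsp G10[OF C r] add_divide_distrib diff_divide_distrib algebra_simps)
    then show ?thesis using tw tb bt by simp
  qed
  have "(\<Sum>i\<in>UNIV - {0}. S $ i * (\<Sum>j\<in>UNIV - {0}. T $ j * vf (barv i) (vf (barv j) \<phi>) p))
     = (\<Sum>i\<in>UNIV - {0}. S $ i * (bil XI (barv i p) T - (barv i p \<bullet> T) * ?Dr / rad p))"
    by (intro sum.cong refl) (simp add: inner)
  also have "\<dots> = (S $ 1 * bil XI (barv 1 p) T + S $ 2 * bil XI (barv 2 p) T + S $ 3 * bil XI (barv 3 p) T)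
      - (S $ 1 * (barv 1 p \<bullet> T) + S $ 2 * (barv 2 p \<bullet> T) + S $ 3 * (barv 3 p \<bullet> T)) * ?Dr / rad p"
    by (simp add: sumsp algebra_simps diff_divide_distrib add_divide_distrib)
  also have "S $ 1 * bil XI (barv 1 p) T + S $ 2 * bil XI (barv 2 p) T + S $ 3 * bil XI (barv 3 p) T = bil XI S T"
  proof -
    have "bil XI S T = bil XI (S $ 1 *\<^sub>R barv 1 p + S $ 2 *\<^sub>R barv 2 p + S $ 3 *\<^sub>R barv 3 p) T"
      using frame_sum3[OF S0 Sw] by simp
    then show ?thesis by (simp only: bil_add_l bil_scale_l)
  qed
  also have "S $ 1 * (barv 1 p \<bullet> T) + S $ 2 * (barv 2 p \<bullet> T) + S $ 3 * (barv 3 p \<bullet> T) = S \<bullet> T"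
  proof -
    have "S \<bullet> T = (S $ 1 *\<^sub>R barv 1 p + S $ 2 *\<^sub>R barv 2 p + S $ 3 *\<^sub>R barv 3 p) \<bullet> T"
      using frame_sum3[OF S0 Sw] by simp
    then show ?thesis by (simp only: inner_add_left inner_scaleR_left)
  qed
  finally have fin: "(\<Sum>i\<in>UNIV - {0}. S $ i * (\<Sum>j\<in>UNIV - {0}. T $ j * vf (barv i) (vf (barv j) \<phi>) p))
     = bil XI S T - (S \<bullet> T) * ?Dr / rad p" .
  have c: "rad p * ((S \<bullet> T) * ?Dr / rad p) = (S \<bullet> T) * ?Dr" using r by simp
  show ?thesis unfolding fin right_diff_distrib c ..
qed

end



lemma ident:
  fixes r g f0 Ds Dq Dr lap XLL XLLb XLbLb XLS1 XLS2 XLbS1 XLbS2 X11 X12 X22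
    HLL HLLb HLbLb HLS1 HLS2 HLbS1 HLbS2 H11 H12 H22 psi vfs vfq Fp :: real
  assumes r: "r > 0" and g: "g = -1/2 + HLLb/4" and gn: "g \<noteq> 0"
    and psi: "psi = f0/2 + r * Dq" and vfs: "vfs = Ds/2 + Dq/2 - r/4 * XLLb" and vfq: "vfq = Dq + r/4 * XLbLb"
    and Dr: "Dr = Ds + Dq"
    and Fp: "Fp = lap + 2 * Dr/r - XLLb + (1/4 * HLbLb * XLL + 1/4 * HLL * XLbLb + 1/2 * HLLb * XLLb
       - HLbS1 * XLS1 - HLbS2 * XLS2 - HLS1 * XLbS1 - HLS2 * XLbS2 + H11 * X11 + 2 * H12 * X12 + H22 * X22)"
  shows "2 * g * (4 * vfs - HLL/(2 * g) * vfq - (H11+H22+HLLb)/(2 * g * r) * psi + r * Fp/(2 * g)) =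
    r * lap + (HLLb+H11+H22) * Ds - HLL * Dq - (H11+H22+HLLb) * f0/(2 * r) + r * HLbLb/4 * XLL
    - r * HLbS1 * XLS1 - r * HLbS2 * XLS2 - r * HLS1 * XLbS1 - r * HLS2 * XLbS2
    + H11 * (r * X11 - Dr) + 2 * H12 * (r * X12) + H22 * (r * X22 - Dr)"
proof -
  have rn: "r \<noteq> 0" using r by simp
  have e1: "2 * g * (4 * vfs - HLL/(2 * g) * vfq - (H11+H22+HLLb)/(2 * g * r) * psi + r * Fp/(2 * g))
     = 8 * g * vfs - HLL * vfq - (H11+H22+HLLb) * psi / r + r * Fp"
    using gn rn by (simp add: field_simps)
  have e2: "(H11+H22+HLLb) * psi / r = (H11+H22+HLLb) * f0 / (2 * r) + (H11+H22+HLLb) * Dq"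
    unfolding psi using rn by (simp add: field_simps)
  have e3: "r * Fp = r * lap + 2 * Dr - r * XLLb + r * (1/4 * HLbLb * XLL + 1/4 * HLL * XLbLb + 1/2 * HLLb * XLLb
       - HLbS1 * XLS1 - HLbS2 * XLS2 - HLS1 * XLbS1 - HLS2 * XLbS2 + H11 * X11 + 2 * H12 * X12 + H22 * X22)"
    unfolding Fp using rn by (simp add: field_simps)
  have e4g: "8 * g * (Ds/2 + Dq/2 - r/4 * XLLb) - HLL * (Dq + r/4 * XLbLb) - ((H11+H22+HLLb) * P + (H11+H22+HLLb) * Dq)
    + (r * lap + 2 * (Ds + Dq) - r * XLLb + r * (1/4 * HLbLb * XLL + 1/4 * HLL * XLbLb + 1/2 * HLLb * XLLb
       - HLbS1 * XLS1 - HLbS2 * XLS2 - HLS1 * XLbS1 - HLS2 * XLbS2 + H11 * X11 + 2 * H12 * X12 + H22 * X22)) =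
    r * lap + (HLLb+H11+H22) * Ds - HLL * Dq - (H11+H22+HLLb) * P + r * HLbLb/4 * XLL
    - r * HLbS1 * XLS1 - r * HLbS2 * XLS2 - r * HLS1 * XLbS1 - r * HLS2 * XLbS2
    + H11 * (r * X11 - (Ds + Dq)) + 2 * H12 * (r * X12) + H22 * (r * X22 - (Ds + Dq))" for P
    unfolding g by (simp add: algebra_simps)
  have e4: "8 * g * vfs - HLL * vfq - (H11+H22+HLLb) * psi / r + r * Fp =
    r * lap + (HLLb+H11+H22) * Ds - HLL * Dq - (H11+H22+HLLb) * f0/(2 * r) + r * HLbLb/4 * XLL
    - r * HLbS1 * XLS1 - r * HLbS2 * XLS2 - r * HLS1 * XLbS1 - r * HLS2 * XLbS2
    + H11 * (r * X11 - Dr) + 2 * H12 * (r * X12) + H22 * (r * X22 - Dr)"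
    unfolding e2 e3 vfs vfq Dr using e4g[of "f0/(2 * r)"] by (simp add: mult.assoc)
  show ?thesis unfolding e1 e4 ..
qed

lemma absmul: "\<bar>a\<bar> \<le> A \<Longrightarrow> \<bar>b\<bar> \<le> B \<Longrightarrow> \<bar>a * b\<bar> \<le> A * (B::real)"
  by (simp add: abs_mult mult_mono' order_trans[OF abs_ge_zero])

lemma tri: "\<bar>a\<bar> \<le> A \<Longrightarrow> \<bar>b\<bar> \<le> B \<Longrightarrow> \<bar>a + b\<bar> \<le> A + (B::real)"
  by (rule order_trans[OF abs_triangle_ineq add_mono])
lemma trid: "\<bar>a\<bar> \<le> A \<Longrightarrow> \<bar>b\<bar> \<le> B \<Longrightarrow> \<bar>a - b\<bar> \<le> A + (B::real)"
  by (rule order_trans[OF abs_triangle_ineq4 add_mono])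



lemma abs_omg: "rad p > 0 \<Longrightarrow> \<bar>omg p $ b\<bar> \<le> 1"
  using component_le_norm_cart[of "omg p" b] norm_omg[of p] by simp

lemma comp_L: "rad p > 0 \<Longrightarrow> \<bar>Lv p $ a\<bar> \<le> 1"
  using abs_omg[of p a] omg0[of p] by (cases "a = 0") (auto simp: L_comp e0_comp)
lemma comp_Lb: "rad p > 0 \<Longrightarrow> \<bar>Lbv p $ a\<bar> \<le> 1"
  using abs_omg[of p a] omg0[of p] by (cases "a = 0") (auto simp: Lb_comp e0_comp)
lemma comp_S: "norm (S::real^4) = 1 \<Longrightarrow> \<bar>S $ a\<bar> \<le> 1"
  using component_le_norm_cart[of S a] by simp
lemma comp_qv: "rad p > 0 \<Longrightarrow> \<bar>qv p $ a\<bar> \<le> 1"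
  using abs_omg[of p a] by (auto simp: qv_comp e0_comp)

lemma Hlow_bound:
  assumes "\<And>a. \<bar>u $ a\<bar> \<le> 1" "\<And>b. \<bar>v $ b\<bar> \<le> 1"
  shows "\<bar>Hlow h u v\<bar> \<le> habs h"
proof -
  have "\<bar>Hlow h u v\<bar> \<le> (\<Sum>a\<in>UNIV. \<bar>\<Sum>b\<in>UNIV. mlow u $ a * mlow v $ b * h a b\<bar>)"
    unfolding Hlow_def by (rule sum_abs)
  also have "\<dots> \<le> (\<Sum>a\<in>UNIV. \<Sum>b\<in>UNIV. \<bar>h a b\<bar>)"
  proof (rule sum_mono)
    fix a :: 4
    have "\<bar>\<Sum>b\<in>UNIV. mlow u $ a * mlow v $ b * h a b\<bar> \<le> (\<Sum>b\<in>UNIV. \<bar>mlow u $ a * mlow v $ b * h a b\<bar>)"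
      by (rule sum_abs)
    also have "\<dots> \<le> (\<Sum>b\<in>UNIV. \<bar>h a b\<bar>)"
    proof (rule sum_mono)
      fix b :: 4
      have "\<bar>mlow u $ a * mlow v $ b\<bar> \<le> 1 * 1"
        unfolding abs_mult using assms[of a] assms(2)[of b]
        by (intro mult_mono) (auto simp: mlow_comp)
      then show "\<bar>mlow u $ a * mlow v $ b * h a b\<bar> \<le> \<bar>h a b\<bar>"
        by (metis abs_ge_zero abs_mult mult_le_cancel_right1 mult_1 mult_right_mono)
    qed
    finally show "\<bar>\<Sum>b\<in>UNIV. mlow u $ a * mlow v $ b * h a b\<bar> \<le> (\<Sum>b\<in>UNIV. \<bar>h a b\<bar>)" .
  qed
  finally show ?thesis by (simp add: habs_def)
qed

lemma bar2_bound: "\<bar>vf (barv a) (vf (barv b) \<phi>) p\<bar> \<le> bar2_norm \<phi> p"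
proof -
  let ?Y = "\<lambda>a b. vf (barv a) (vf (barv b) \<phi>) p"
  have "(?Y a b)^2 \<le> (\<Sum>b'\<in>UNIV. (?Y a b')^2)"
    by (rule member_le_sum) auto
  also have "\<dots> \<le> (\<Sum>a'\<in>UNIV. \<Sum>b'\<in>UNIV. (?Y a' b')^2)"
    by (rule member_le_sum[where f="\<lambda>a'. \<Sum>b'\<in>UNIV. (?Y a' b')^2"]) (auto intro: sum_nonneg)
  finally have "sqrt ((?Y a b)^2) \<le> bar2_norm \<phi> p"
    unfolding bar2_norm_def by (rule real_sqrt_le_mono)
  then show ?thesis by simp
qed

lemma bard_bound: "\<bar>vf (barv a) \<phi> p\<bar> \<le> bard_abs \<phi> p"
  unfolding bard_abs_def by (rule member_le_sum[where f="\<lambda>a. \<bar>vf (barv a) \<phi> p\<bar>"]) auto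

lemma bardd_bound: "\<bar>vf (barv a) (pd \<phi> b) p\<bar> \<le> bardd_abs \<phi> p"
proof -
  have "\<bar>vf (barv a) (pd \<phi> b) p\<bar> \<le> (\<Sum>b'\<in>UNIV. \<bar>vf (barv a) (pd \<phi> b') p\<bar>)"
    by (rule member_le_sum[where f="\<lambda>b'. \<bar>vf (barv a) (pd \<phi> b') p\<bar>"]) auto
  also have "\<dots> \<le> bardd_abs \<phi> p"
    unfolding bardd_abs_def
    by (rule member_le_sum[where f="\<lambda>a. \<Sum>b'\<in>UNIV. \<bar>vf (barv a) (pd \<phi> b') p\<bar>"]) (auto intro: sum_nonneg)
  finally show ?thesis .
qed

lemma dabs_bound: "\<bar>pd \<phi> b p\<bar> \<le> dabs \<phi> p"
  unfolding dabs_def by (rule member_le_sum[where f="\<lambda>a. \<bar>pd \<phi> a p\<bar>"]) auto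

lemma sum3_bound: "(\<And>i. i \<noteq> 0 \<Longrightarrow> \<bar>f i\<bar> \<le> B) \<Longrightarrow> \<bar>\<Sum>i\<in>UNIV - {0::4}. f i\<bar> \<le> 3 * (B::real)"
proof -
  assume a: "\<And>i. i \<noteq> 0 \<Longrightarrow> \<bar>f i\<bar> \<le> B"
  have "\<bar>f 1\<bar> \<le> B" "\<bar>f 2\<bar> \<le> B" "\<bar>f 3\<bar> \<le> B" using a by auto
  then show ?thesis unfolding sumsp by (smt (verit) abs_triangle_ineq)
qed

lemma sum4_bound: "(\<And>i. \<bar>f i\<bar> \<le> B) \<Longrightarrow> \<bar>\<Sum>i::4\<in>UNIV. f i\<bar> \<le> 4 * (B::real)"
proof -
  assume a: "\<And>i. \<bar>f i\<bar> \<le> B"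
  have "\<bar>f 0\<bar> \<le> B" "\<bar>f 1\<bar> \<le> B" "\<bar>f 2\<bar> \<le> B" "\<bar>f 3\<bar> \<le> B" using a by auto
  then show ?thesis unfolding sum4 by (smt (verit) abs_triangle_ineq)
qed

context
  fixes \<phi> :: "real^4 \<Rightarrow> real" and p :: "real^4"
  assumes C: "C2 \<phi>" and r: "rad p > 0"
begin

lemma DqB: "\<bar>\<Sum>b\<in>UNIV. qv p $ b * pd \<phi> b p\<bar> \<le> dabs \<phi> p"
proof -
  have "\<bar>\<Sum>b\<in>UNIV. qv p $ b * pd \<phi> b p\<bar> \<le> (\<Sum>b\<in>UNIV. \<bar>qv p $ b * pd \<phi> b p\<bar>)"
    by (rule sum_abs)
  also have "\<dots> \<le> (\<Sum>b\<in>UNIV. \<bar>pd \<phi> b p\<bar>)"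
  proof (rule sum_mono)
    fix b
    show "\<bar>qv p $ b * pd \<phi> b p\<bar> \<le> \<bar>pd \<phi> b p\<bar>"
      using comp_qv[OF r, of b] by (simp add: abs_mult mult_left_le_one_le)
  qed
  finally show ?thesis by (simp add: dabs_def)
qed

lemma LSB:
  assumes "S $ 0 = 0" "S \<bullet> omg p = 0" "norm S = 1"
  shows "\<bar>rad p * bil (\<lambda>a b. pd (pd \<phi> b) a p) (Lv p) S\<bar> \<le> 3 * (rad p * bar2_norm \<phi> p + bard_abs \<phi> p)"
  unfolding G13[OF C r assms(1,2)]
proof (rule sum3_bound)
  fix i :: 4
  have "\<bar>rad p * vf (barv i) (vf (barv 0) \<phi>) p - vf (barv i) \<phi> p\<bar> \<le> rad p * bar2_norm \<phi> p + bard_abs \<phi> p"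
    using bar2_bound[of i 0 \<phi> p] bard_bound[of i \<phi> p] r
    by (intro trid) (auto simp: abs_mult intro: mult_left_mono)
  then show "\<bar>S $ i * (rad p * vf (barv i) (vf (barv 0) \<phi>) p - vf (barv i) \<phi> p)\<bar>
      \<le> rad p * bar2_norm \<phi> p + bard_abs \<phi> p"
    using absmul[OF comp_S[OF assms(3), of i]] by fastforce
qed

lemma LbSB:
  assumes "S $ 0 = 0" "S \<bullet> omg p = 0" "norm S = 1"
  shows "\<bar>bil (\<lambda>a b. pd (pd \<phi> b) a p) (Lbv p) S\<bar> \<le> 3 * (4 * bardd_abs \<phi> p)"
  unfolding G14[OF C r assms(1,2)]
proof (rule sum3_bound)
  fix i :: 4
  have "\<bar>\<Sum>b\<in>UNIV. Lbv p $ b * vf (barv i) (pd \<phi> b) p\<bar> \<le> 4 * bardd_abs \<phi> p"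
  proof (rule sum4_bound)
    fix b
    show "\<bar>Lbv p $ b * vf (barv i) (pd \<phi> b) p\<bar> \<le> bardd_abs \<phi> p"
      using absmul[OF comp_Lb[OF r, of b] bardd_bound[of i \<phi> b p]] by simp
  qed
  then show "\<bar>S $ i * (\<Sum>b\<in>UNIV. Lbv p $ b * vf (barv i) (pd \<phi> b) p)\<bar> \<le> 4 * bardd_abs \<phi> p"
    using absmul[OF comp_S[OF assms(3), of i]] by fastforce
qed

lemma SSB:
  assumes "S $ 0 = 0" "S \<bullet> omg p = 0" "norm S = 1" "T $ 0 = 0" "T \<bullet> omg p = 0" "norm T = 1"
  shows "\<bar>rad p * bil (\<lambda>a b. pd (pd \<phi> b) a p) S T - (S \<bullet> T) * (\<Sum>b\<in>UNIV. omg p $ b * pd \<phi> b p)\<bar>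
     \<le> 9 * (rad p * bar2_norm \<phi> p)"
proof -
  have "\<bar>\<Sum>i\<in>UNIV - {0}. S $ i * (\<Sum>j\<in>UNIV - {0}. T $ j * vf (barv i) (vf (barv j) \<phi>) p)\<bar>
     \<le> 3 * (3 * bar2_norm \<phi> p)"
  proof (rule sum3_bound)
    fix i :: 4
    have "\<bar>\<Sum>j\<in>UNIV - {0}. T $ j * vf (barv i) (vf (barv j) \<phi>) p\<bar> \<le> 3 * bar2_norm \<phi> p"
    proof (rule sum3_bound)
      fix j :: 4
      show "\<bar>T $ j * vf (barv i) (vf (barv j) \<phi>) p\<bar> \<le> bar2_norm \<phi> p"
        using absmul[OF comp_S[OF assms(6), of j] bar2_bound[of i j \<phi> p]] by simp
    qed
    then show "\<bar>S $ i * (\<Sum>j\<in>UNIV - {0}. T $ j * vf (barv i) (vf (barv j) \<phi>) p)\<bar> \<le> 3 * bar2_norm \<phi> p"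
      using absmul[OF comp_S[OF assms(3), of i]] by fastforce
  qed
  then show ?thesis
    unfolding G15[OF C r assms(1,2,4,5)] using r by (simp add: abs_mult)
qed

end


lemma main_point:
  fixes \<phi> :: "real^4 \<Rightarrow> real" and H :: "real^4 \<Rightarrow> 4 \<Rightarrow> 4 \<Rightarrow> real" and F :: "real^4 \<Rightarrow> real"
  assumes C: "C2 \<phi>" and Hs: "\<forall>q a b. H q a b = H q b a" and Hg: "\<bar>HupLLb (H p) p\<bar> < 1/4"
    and Fd: "F p = boxg H \<phi> p" and r: "rad p > 0"
    and s10: "S1 $ 0 = 0" and s20: "S2 $ 0 = 0" and n1: "norm S1 = 1" and n2: "norm S2 = 1"
    and s12: "S1 \<bullet> S2 = 0" and s1w: "S1 \<bullet> omg p = 0" and s2w: "S2 \<bullet> omg p = 0"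
  shows "\<bar>4 * vf sv (vf qv (\<lambda>y. rad y * \<phi> y)) p
        - Hlow (H p) (Lv p) (Lv p) / (2 * gLLb (H p) p) * vf qv (vf qv (\<lambda>y. rad y * \<phi> y)) p
        - (trbar (H p) S1 S2 + Hlow (H p) (Lv p) (Lbv p)) / (2 * gLLb (H p) p * rad p) * vf qv (\<lambda>y. rad y * \<phi> y) p
        + rad p * F p / (2 * gLLb (H p) p)\<bar>
     \<le> 100 * (rad p * \<bar>lapw \<phi> p\<bar> + HLT (H p) p S1 S2 * (rad p * bardd_abs \<phi> p + dabs \<phi> p)
            + habs (H p) * (rad p * bar2_norm \<phi> p + bard_abs \<phi> p + \<bar>\<phi> p\<bar> / rad p))"
proof -
  define h where "h = H p"
  have hs: "\<And>a b. h a b = h b a" using Hs h_def by auto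
  define X where "X = (\<lambda>a b. pd (pd \<phi> b) a p)"
  have xs: "\<And>a b. X a b = X b a" unfolding X_def by (rule Xsym[OF C r])
  define g where "g = gLLb h p"
  define rr where "rr = rad p"
  define Ds where "Ds = (\<Sum>b\<in>UNIV. sv p $ b * pd \<phi> b p)"
  define Dq where "Dq = (\<Sum>b\<in>UNIV. qv p $ b * pd \<phi> b p)"
  define Dr where "Dr = (\<Sum>b\<in>UNIV. omg p $ b * pd \<phi> b p)"
  define psi where "psi = vf qv (\<lambda>y. rad y * \<phi> y) p"
  define vfs where "vfs = vf sv (vf qv (\<lambda>y. rad y * \<phi> y)) p"
  define vfq where "vfq = vf qv (vf qv (\<lambda>y. rad y * \<phi> y)) p"
  define lap where "lap = lapw \<phi> p"
  define HLL where "HLL = Hlow h (Lv p) (Lv p)"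
  define HLLb where "HLLb = Hlow h (Lv p) (Lbv p)"
  define HLbLb where "HLbLb = Hlow h (Lbv p) (Lbv p)"
  define HLS1 where "HLS1 = Hlow h (Lv p) S1"
  define HLS2 where "HLS2 = Hlow h (Lv p) S2"
  define HLbS1 where "HLbS1 = Hlow h (Lbv p) S1"
  define HLbS2 where "HLbS2 = Hlow h (Lbv p) S2"
  define H11 where "H11 = Hlow h S1 S1"
  define H12 where "H12 = Hlow h S1 S2"
  define H22 where "H22 = Hlow h S2 S2"
  define XLL where "XLL = bil X (Lv p) (Lv p)"
  define XLLb where "XLLb = bil X (Lv p) (Lbv p)"
  define XLbLb where "XLbLb = bil X (Lbv p) (Lbv p)"
  define XLS1 where "XLS1 = bil X (Lv p) S1"
  define XLS2 where "XLS2 = bil X (Lv p) S2"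
  define XLbS1 where "XLbS1 = bil X (Lbv p) S1"
  define XLbS2 where "XLbS2 = bil X (Lbv p) S2"
  define X11 where "X11 = bil X S1 S1"
  define X12 where "X12 = bil X S1 S2"
  define X22 where "X22 = bil X S2 S2"
  have rr: "rr > 0" using r rr_def by simp
  have gdef: "g = -1/2 + HLLb/4"
    unfolding g_def gLLb_def HupLLb_def HLLb_def using Hlow_sym[of h "Lbv p" "Lv p"] hs by simp
  have gneg: "g < -1/4" using Hg unfolding g_def gLLb_def h_def by (simp add: abs_less_iff)
  then have gn: "g \<noteq> 0" by simp
  have psi: "psi = \<phi> p/2 + rr * Dq" unfolding psi_def rr_def Dq_def by (rule G1[OF C r])
  have vfs: "vfs = Ds/2 + Dq/2 - rr/4 * XLLb"
    unfolding vfs_def Ds_def Dq_def rr_def XLLb_def X_def by (rule G2[OF C r])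
  have vfq: "vfq = Dq + rr/4 * XLbLb"
    unfolding vfq_def Dq_def rr_def XLbLb_def X_def by (rule G3[OF C r])
  have Dr: "Dr = Ds + Dq" unfolding Dr_def Ds_def Dq_def by (rule G4[OF C r])
  have hx: "(\<Sum>a\<in>UNIV. \<Sum>b\<in>UNIV. h a b * X a b) = 1/4 * HLbLb * XLL + 1/4 * HLL * XLbLb + 1/2 * HLLb * XLLb
       - HLbS1 * XLS1 - HLbS2 * XLS2 - HLS1 * XLbS1 - HLS2 * XLbS2 + H11 * X11 + 2 * H12 * X12 + H22 * X22"
    unfolding HLbLb_def XLL_def HLL_def XLbLb_def HLLb_def XLLb_def HLbS1_def XLS1_def HLbS2_def XLS2_def
      HLS1_def XLbS1_def HLS2_def XLbS2_def H11_def X11_def H12_def X12_def H22_def X22_def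
    by (rule HX[OF r s10 s20 n1 n2 s12 s1w s2w hs xs])
  have g5: "F p = (- X 0 0 + X 1 1 + X 2 2 + X 3 3) + (\<Sum>a\<in>UNIV. \<Sum>b\<in>UNIV. h a b * X a b)"
    unfolding Fd X_def h_def by (rule G5[OF C r])
  have g6: "lap = X 1 1 + X 2 2 + X 3 3 - bil X (omg p) (omg p) - 2 * Dr / rr"
    unfolding lap_def X_def Dr_def rr_def by (rule G6[OF C r])
  have g7: "XLLb = X 0 0 - bil X (omg p) (omg p)"
    unfolding XLLb_def X_def by (rule G7[OF C r])
  have Fp: "F p = lap + 2 * Dr / rr - XLLb + (1/4 * HLbLb * XLL + 1/4 * HLL * XLbLb + 1/2 * HLLb * XLLb
       - HLbS1 * XLS1 - HLbS2 * XLS2 - HLS1 * XLbS1 - HLS2 * XLbS2 + H11 * X11 + 2 * H12 * X12 + H22 * X22)"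
    using g5 g6 g7 hx by simp
  have tr: "trbar h S1 S2 = H11 + H22" unfolding trbar_def H11_def H22_def ..
  define E where "E = 4 * vfs - HLL / (2 * g) * vfq - (H11 + H22 + HLLb) / (2 * g * rr) * psi + rr * F p / (2 * g)"
  have idt: "2 * g * E =
    rr * lap + (HLLb+H11+H22) * Ds - HLL * Dq - (H11+H22+HLLb) * \<phi> p / (2 * rr) + rr * HLbLb/4 * XLL
    - rr * HLbS1 * XLS1 - rr * HLbS2 * XLS2 - rr * HLS1 * XLbS1 - rr * HLS2 * XLbS2
    + H11 * (rr * X11 - Dr) + 2 * H12 * (rr * X12) + H22 * (rr * X22 - Dr)"
    unfolding E_def by (rule ident[OF rr gdef gn psi vfs vfq Dr Fp])
  define ha where "ha = habs h"
  define hl where "hl = HLT h p S1 S2"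
  define b2 where "b2 = bar2_norm \<phi> p"
  define bd where "bd = bard_abs \<phi> p"
  define bdd where "bdd = bardd_abs \<phi> p"
  define da where "da = dabs \<phi> p"
  define P where "P = \<bar>\<phi> p\<bar> / rr"
  have cL: "\<And>a. \<bar>Lv p $ a\<bar> \<le> 1" by (rule comp_L[OF r])
  have cLb: "\<And>a. \<bar>Lbv p $ a\<bar> \<le> 1" by (rule comp_Lb[OF r])
  have c1: "\<And>a. \<bar>S1 $ a\<bar> \<le> 1" by (rule comp_S[OF n1])
  have c2: "\<And>a. \<bar>S2 $ a\<bar> \<le> 1" by (rule comp_S[OF n2])
  have bHLLb: "\<bar>HLLb\<bar> \<le> ha" unfolding HLLb_def ha_def by (rule Hlow_bound[OF cL cLb])
  have bHLbLb: "\<bar>HLbLb\<bar> \<le> ha" unfolding HLbLb_def ha_def by (rule Hlow_bound[OF cLb cLb])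
  have bHLbS1: "\<bar>HLbS1\<bar> \<le> ha" unfolding HLbS1_def ha_def by (rule Hlow_bound[OF cLb c1])
  have bHLbS2: "\<bar>HLbS2\<bar> \<le> ha" unfolding HLbS2_def ha_def by (rule Hlow_bound[OF cLb c2])
  have bH11: "\<bar>H11\<bar> \<le> ha" unfolding H11_def ha_def by (rule Hlow_bound[OF c1 c1])
  have bH12: "\<bar>H12\<bar> \<le> ha" unfolding H12_def ha_def by (rule Hlow_bound[OF c1 c2])
  have bH22: "\<bar>H22\<bar> \<le> ha" unfolding H22_def ha_def by (rule Hlow_bound[OF c2 c2])
  have bHLL: "\<bar>HLL\<bar> \<le> hl" and bHLS1: "\<bar>HLS1\<bar> \<le> hl" and bHLS2: "\<bar>HLS2\<bar> \<le> hl"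
    unfolding HLL_def HLS1_def HLS2_def hl_def HLT_def by auto
  have bDs: "\<bar>Ds\<bar> \<le> bd / 2"
    using bard_bound[of 0 \<phi> p] unfolding Ds_def bd_def G12[OF C r] by simp
  have bDq: "\<bar>Dq\<bar> \<le> da" unfolding Dq_def da_def by (rule DqB[OF C r])
  have bXLL: "\<bar>rr * XLL\<bar> \<le> rr * b2"
    using bar2_bound[of 0 0 \<phi> p] rr unfolding XLL_def X_def b2_def G8[OF C r, symmetric]
    by (simp add: abs_mult)
  have bXLS1: "\<bar>rr * XLS1\<bar> \<le> 3 * (rr * b2 + bd)"
    unfolding XLS1_def X_def rr_def b2_def bd_def by (rule LSB[OF C r s10 s1w n1])
  have bXLS2: "\<bar>rr * XLS2\<bar> \<le> 3 * (rr * b2 + bd)"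
    unfolding XLS2_def X_def rr_def b2_def bd_def by (rule LSB[OF C r s20 s2w n2])
  have bXLbS1: "\<bar>rr * XLbS1\<bar> \<le> rr * (12 * bdd)"
    using LbSB[OF C r s10 s1w n1] rr unfolding XLbS1_def X_def bdd_def by (simp add: abs_mult)
  have bXLbS2: "\<bar>rr * XLbS2\<bar> \<le> rr * (12 * bdd)"
    using LbSB[OF C r s20 s2w n2] rr unfolding XLbS2_def X_def bdd_def by (simp add: abs_mult)
  have s11: "S1 \<bullet> S1 = 1" using n1 by (simp add: dot_square_norm)
  have s22: "S2 \<bullet> S2 = 1" using n2 by (simp add: dot_square_norm)
  have bX11: "\<bar>rr * X11 - Dr\<bar> \<le> 9 * (rr * b2)"
    using SSB[OF C r s10 s1w n1 s10 s1w n1] s11 unfolding X11_def X_def Dr_def rr_def b2_def by simp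
  have bX22: "\<bar>rr * X22 - Dr\<bar> \<le> 9 * (rr * b2)"
    using SSB[OF C r s20 s2w n2 s20 s2w n2] s22 unfolding X22_def X_def Dr_def rr_def b2_def by simp
  have bX12: "\<bar>rr * X12\<bar> \<le> 9 * (rr * b2)"
    using SSB[OF C r s10 s1w n1 s20 s2w n2] s12 unfolding X12_def X_def Dr_def rr_def b2_def by simp
  have t0: "\<bar>rr * lap\<bar> = rr * \<bar>lap\<bar>" using rr by (simp add: abs_mult)
  have t1: "\<bar>(HLLb+H11+H22) * Ds\<bar> \<le> (3 * ha) * (bd / 2)"
    by (rule absmul[OF _ bDs]) (use bHLLb bH11 bH22 in linarith)
  have t2: "\<bar>HLL * Dq\<bar> \<le> hl * da" by (rule absmul[OF bHLL bDq])
  have t3: "\<bar>(H11+H22+HLLb) * \<phi> p / (2 * rr)\<bar> \<le> (3 * ha) * P / 2"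
  proof -
    have "\<bar>(H11+H22+HLLb) * (\<phi> p / rr)\<bar> \<le> (3 * ha) * P"
      by (rule absmul) (use bHLLb bH11 bH22 rr in \<open>auto simp: P_def\<close>)
    then show ?thesis by (simp add: abs_mult)
  qed
  have t4: "\<bar>rr * HLbLb / 4 * XLL\<bar> \<le> ha * (rr * b2) / 4"
  proof -
    have "\<bar>HLbLb * (rr * XLL)\<bar> \<le> ha * (rr * b2)" by (rule absmul[OF bHLbLb bXLL])
    then show ?thesis by (simp add: abs_mult algebra_simps)
  qed
  have t5: "\<bar>rr * HLbS1 * XLS1\<bar> \<le> ha * (3 * (rr * b2 + bd))"
    using absmul[OF bHLbS1 bXLS1] by (simp add: ac_simps)
  have t6: "\<bar>rr * HLbS2 * XLS2\<bar> \<le> ha * (3 * (rr * b2 + bd))"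
    using absmul[OF bHLbS2 bXLS2] by (simp add: ac_simps)
  have t7: "\<bar>rr * HLS1 * XLbS1\<bar> \<le> hl * (rr * (12 * bdd))"
    using absmul[OF bHLS1 bXLbS1] by (simp add: ac_simps)
  have t8: "\<bar>rr * HLS2 * XLbS2\<bar> \<le> hl * (rr * (12 * bdd))"
    using absmul[OF bHLS2 bXLbS2] by (simp add: ac_simps)
  have t9: "\<bar>H11 * (rr * X11 - Dr)\<bar> \<le> ha * (9 * (rr * b2))" by (rule absmul[OF bH11 bX11])
  have t10: "\<bar>2 * H12 * (rr * X12)\<bar> \<le> 2 * (ha * (9 * (rr * b2)))"
    using absmul[OF bH12 bX12] by (simp add: abs_mult ac_simps)
  have t11: "\<bar>H22 * (rr * X22 - Dr)\<bar> \<le> ha * (9 * (rr * b2))" by (rule absmul[OF bH22 bX22])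
  have sumb: "\<bar>2 * g * E\<bar> \<le> rr * \<bar>lap\<bar> + (3 * ha) * (bd / 2) + hl * da + (3 * ha) * P / 2 + ha * (rr * b2) / 4
     + ha * (3 * (rr * b2 + bd)) + ha * (3 * (rr * b2 + bd)) + hl * (rr * (12 * bdd)) + hl * (rr * (12 * bdd))
     + ha * (9 * (rr * b2)) + 2 * (ha * (9 * (rr * b2))) + ha * (9 * (rr * b2))"
    unfolding idt using t0 t1 t2 t3 t4 t5 t6 t7 t8 t9 t10 t11
    by (simp only: abs_le_iff) linarith
  have nn: "0 \<le> ha" "0 \<le> hl" "0 \<le> b2" "0 \<le> bd" "0 \<le> bdd" "0 \<le> da" "0 \<le> P"
    unfolding ha_def hl_def b2_def bd_def bdd_def da_def P_def habs_def HLT_def bar2_norm_def bard_abs_def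
      bardd_abs_def dabs_def using rr by (auto intro!: sum_nonneg)
  define Q where "Q = rr * \<bar>lap\<bar> + hl * (rr * bdd + da) + ha * (rr * b2 + bd + P)"
  have diff: "50 * Q - (rr * \<bar>lap\<bar> + (3 * ha) * (bd / 2) + hl * da + (3 * ha) * P / 2 + ha * (rr * b2) / 4
     + ha * (3 * (rr * b2 + bd)) + ha * (3 * (rr * b2 + bd)) + hl * (rr * (12 * bdd)) + hl * (rr * (12 * bdd))
     + ha * (9 * (rr * b2)) + 2 * (ha * (9 * (rr * b2))) + ha * (9 * (rr * b2)))
     = 49 * (rr * \<bar>lap\<bar>) + 26 * (hl * (rr * bdd)) + 49 * (hl * da) + 31/4 * (ha * (rr * b2))
       + 85/2 * (ha * bd) + 97/2 * (ha * P)"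
    unfolding Q_def by (simp add: algebra_simps)
  have "0 \<le> 49 * (rr * \<bar>lap\<bar>) + 26 * (hl * (rr * bdd)) + 49 * (hl * da) + 31/4 * (ha * (rr * b2))
       + 85/2 * (ha * bd) + 97/2 * (ha * P)"
    using nn rr by (intro add_nonneg_nonneg mult_nonneg_nonneg) auto
  then have "\<bar>2 * g * E\<bar> \<le> 50 * Q" using sumb diff by linarith
  moreover have "\<bar>2 * g * E\<bar> = \<bar>2 * g\<bar> * \<bar>E\<bar>" by (simp add: abs_mult)
  moreover have "\<bar>2 * g\<bar> \<ge> 1/2" using gneg by simp
  ultimately have "\<bar>E\<bar> \<le> 100 * Q"
  proof -
    assume a: "\<bar>2 * g * E\<bar> \<le> 50 * Q" "\<bar>2 * g * E\<bar> = \<bar>2 * g\<bar> * \<bar>E\<bar>" "\<bar>2 * g\<bar> \<ge> 1/2"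
    have "(1/2) * \<bar>E\<bar> \<le> \<bar>2 * g\<bar> * \<bar>E\<bar>" using a(3) by (intro mult_right_mono) auto
    then show ?thesis using a(1,2) by linarith
  qed
  then show ?thesis
    unfolding E_def Q_def vfs_def vfq_def psi_def rr_def lap_def hl_def ha_def b2_def bd_def bdd_def da_def P_def
      HLL_def HLLb_def H11_def H22_def g_def h_def
    by (simp add: ac_simps trbar_def)
qed


theorem corollary4p4:
  shows "\<exists>C>0. \<forall>(\<phi>::real^4 \<Rightarrow> real) (H::real^4 \<Rightarrow> 4 \<Rightarrow> 4 \<Rightarrow> real) (F::real^4 \<Rightarrow> real) p S1 S2.
    C2 \<phi> \<longrightarrow>
    (\<forall>q a b. H q a b = H q b a) \<longrightarrow>
    (\<forall>q. \<bar>HupLLb (H q) q\<bar> < 1/4) \<longrightarrow>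
    (\<forall>q. F q = boxg H \<phi> q) \<longrightarrow>
    rad p > 0 \<longrightarrow>
    S1 $ 0 = 0 \<longrightarrow> S2 $ 0 = 0 \<longrightarrow> norm S1 = 1 \<longrightarrow> norm S2 = 1 \<longrightarrow>
    S1 \<bullet> S2 = 0 \<longrightarrow> S1 \<bullet> omg p = 0 \<longrightarrow> S2 \<bullet> omg p = 0 \<longrightarrow>
    (let h = H p; g = gLLb h p; r = rad p;
         \<psi> = vf qv (\<lambda>y. rad y * \<phi> y) in
     \<bar>4 * vf sv \<psi> p - Hlow h (Lv p) (Lv p) / (2 * g) * vf qv \<psi> p
        - (trbar h S1 S2 + Hlow h (Lv p) (Lbv p)) / (2 * g * r) * \<psi> p
        + r * F p / (2 * g)\<bar>
     \<le> C * (r * \<bar>lapw \<phi> p\<bar>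
            + HLT h p S1 S2 * (r * bardd_abs \<phi> p + dabs \<phi> p)
            + habs h * (r * bar2_norm \<phi> p + bard_abs \<phi> p + \<bar>\<phi> p\<bar> / r)))"
proof (intro exI[of _ "100::real"] conjI allI impI)
  show "(0::real) < 100" by simp
next
  fix \<phi> :: "real^4 \<Rightarrow> real" and H :: "real^4 \<Rightarrow> 4 \<Rightarrow> 4 \<Rightarrow> real" and F :: "real^4 \<Rightarrow> real"
    and p S1 S2 :: "real^4"
  assume a1: "C2 \<phi>" and a2: "\<forall>q a b. H q a b = H q b a" and a3: "\<forall>q. \<bar>HupLLb (H q) q\<bar> < 1/4"
    and a4: "\<forall>q. F q = boxg H \<phi> q" and a5: "rad p > 0"
    and a6: "S1 $ 0 = 0" and a7: "S2 $ 0 = 0" and a8: "norm S1 = 1" and a9: "norm S2 = 1"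
    and a10: "S1 \<bullet> S2 = 0" and a11: "S1 \<bullet> omg p = 0" and a12: "S2 \<bullet> omg p = 0"
  have h3: "\<bar>HupLLb (H p) p\<bar> < 1/4" using a3 by blast
  have h4: "F p = boxg H \<phi> p" using a4 by blast
  show "let h = H p; g = gLLb h p; r = rad p;
         \<psi> = vf qv (\<lambda>y. rad y * \<phi> y) in
     \<bar>4 * vf sv \<psi> p - Hlow h (Lv p) (Lv p) / (2 * g) * vf qv \<psi> p
        - (trbar h S1 S2 + Hlow h (Lv p) (Lbv p)) / (2 * g * r) * \<psi> p
        + r * F p / (2 * g)\<bar>
     \<le> 100 * (r * \<bar>lapw \<phi> p\<bar>
            + HLT h p S1 S2 * (r * bardd_abs \<phi> p + dabs \<phi> p)
            + habs h * (r * bar2_norm \<phi> p + bard_abs \<phi> p + \<bar>\<phi> p\<bar> / r))"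
    unfolding Let_def by (rule main_point[where \<phi>=\<phi> and H=H and F=F and p=p, OF a1 a2 h3 h4 a5 a6 a7 a8 a9 a10 a11 a12])
qed

end
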